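(* Let $K=\mathbb{F}_2(t)$, let $\omega$ be a place of $K$ with $\omega\neq t,t^{-1}$, and for $y\in K_\omega$ let $C_y$ be the conic $x_0^2+x_0x_1+yx_1^2=tx_2^2$. For $k\in\mathbb{N}$, $k\ge1$, set \[\mathcal{A}_{0,k}=\{y\in K_\omega: v_\omega(y)=-k,\ C_y(K_\omega)\neq\emptyset\},\quad \mathcal{A}_{1,k}=\{y\in K_\omega: v_\omega(y)=-k,\ C_y(K_\omega)=\emptyset\}.\] Then for all $k>1$, \[\mu_\omega(\mathcal{A}_{0,k})=\mu_\omega(\mathcal{A}_{1,k})=\tfrac12\mu_\omega(\{y\in K_\omega: v_\omega(y)=-k\})=\tfrac12\cdot 2^{k\deg\omega}(1-2^{-\deg\omega}),\] and for $k=1$, $\mu_\omega(\mathcal{A}_{0,1})=2^{\deg\omega-1}-1$.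
   Context: $K_\omega$ is the completion of $K$ at $\omega$ with valuation $v_\omega$, ring of integers $\mathcal{O}_\omega$, and $\mu_\omega$ is the Haar measure on $K_\omega$ normalized so that $\mu_\omega(\mathcal{O}_\omega)=1$; $\deg\omega$ is the degree of $\omega$ as a monic irreducible polynomial in $\mathbb{F}_2[t]$. *)

theory Defs
  imports "HOL-Analysis.Analysis" "HOL-Probability.Probability"
    "HOL-Computational_Algebra.Polynomial_Factorial" "Berlekamp_Zassenhaus.Finite_Field"
begin

text \<open>Evaluation of a polynomial over F_2 = bit at an element T of a field of characteristic 2
  (the image of t under the embedding F_2(t) into the completion).\<close>
definition f2_eval :: "bool mod_ring poly \<Rightarrow> 'a::field \<Rightarrow> 'a" where
  "f2_eval p T = poly (map_poly (\<lambda>c. if c = 0 then 0 else 1) p) T"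

text \<open>(L, v, T) is the completion of K = F_2(t) at the finite place given by the monic
  irreducible polynomial w: L is a field of characteristic 2, v is a discrete valuation on
  L (its value at 0 is irrelevant), t maps to T, v restricted to F_2[t] is the normalized
  w-adic valuation, K is dense in L and L is complete with respect to v.\<close>
definition is_completion_at :: "bool mod_ring poly \<Rightarrow> 'a::field \<Rightarrow> ('a \<Rightarrow> int) \<Rightarrow> bool" where
  "is_completion_at w T v \<longleftrightarrow>
     (1::'a) + 1 = 0 \<and>
     (\<forall>x y. x \<noteq> 0 \<longrightarrow> y \<noteq> 0 \<longrightarrow> v (x * y) = v x + v y) \<and>
     (\<forall>x y. x \<noteq> 0 \<longrightarrow> y \<noteq> 0 \<longrightarrow> x + y \<noteq> 0 \<longrightarrow> v (x + y) \<ge> min (v x) (v y)) \<and>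
     (\<forall>p. p \<noteq> 0 \<longrightarrow> f2_eval p T \<noteq> 0 \<and> v (f2_eval p T) = int (multiplicity w p)) \<and>
     (\<forall>y (n::int). \<exists>p q. q \<noteq> 0 \<and>
        (y = f2_eval p T / f2_eval q T \<or> v (y - f2_eval p T / f2_eval q T) \<ge> n)) \<and>
     (\<forall>s::nat \<Rightarrow> 'a.
        (\<forall>n::int. \<exists>N. \<forall>i\<ge>N. \<forall>j\<ge>N. s i = s j \<or> v (s i - s j) \<ge> n) \<longrightarrow>
        (\<exists>l. \<forall>n::int. \<exists>N. \<forall>i\<ge>N. s i = l \<or> v (s i - l) \<ge> n))"

text \<open>Closed ball {y. v(y - c) >= n} (with v(0) = +infinity).\<close>
definition vball :: "('a::ab_group_add \<Rightarrow> int) \<Rightarrow> 'a \<Rightarrow> int \<Rightarrow> 'a set" where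
  "vball v c n = {y. y = c \<or> v (y - c) \<ge> n}"

definition is_haar :: "('a::ab_group_add \<Rightarrow> int) \<Rightarrow> 'a measure \<Rightarrow> bool" where
  "is_haar v mu \<longleftrightarrow>
     space mu = UNIV \<and>
     sets mu = sigma_sets UNIV (range (\<lambda>(c, n). vball v c n)) \<and>
     (\<forall>A \<in> sets mu. \<forall>c. (+) c ` A \<in> sets mu \<and> emeasure mu ((+) c ` A) = emeasure mu A) \<and>
     emeasure mu (vball v 0 0) = 1"

definition conic_has_point :: "'a::field \<Rightarrow> 'a \<Rightarrow> bool" where
  "conic_has_point T y \<longleftrightarrow>
     (\<exists>x0 x1 x2. (x0, x1, x2) \<noteq> (0, 0, 0) \<and> x0^2 + x0 * x1 + y * x1^2 = T * x2^2)"

end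

theory Submission
  imports Defs
begin

locale vb =
  fixes v :: "'a::field \<Rightarrow> int"
  assumes char2: "(1::'a) + 1 = 0"
    and vmult: "\<And>x y. x \<noteq> 0 \<Longrightarrow> y \<noteq> 0 \<Longrightarrow> v (x * y) = v x + v y"
    and vultra: "\<And>x y. x \<noteq> 0 \<Longrightarrow> y \<noteq> 0 \<Longrightarrow> x + y \<noteq> 0 \<Longrightarrow> min (v x) (v y) \<le> v (x + y)"
begin

definition J :: "int \<Rightarrow> 'a set" where "J n = {x. x = 0 \<or> n \<le> v x}"

lemma J_iff: "x \<in> J n \<longleftrightarrow> x = 0 \<or> n \<le> v x" by (simp add: J_def)

lemma two0: "(2::'a) = 0" using char2 by (metis one_add_one)
lemma addself[simp]: "(x::'a) + x = 0"
proof - have "x + x = (1+1) * x" by (simp add: algebra_simps) thus ?thesis using char2 by simp qed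
lemma neg_id[simp]: "- (x::'a) = x" using addself[of x] by (metis add_eq_0_iff)
lemma minus_is_plus: "(x::'a) - y = x + y" by (metis neg_id diff_conv_add_uminus)
lemma addself2[simp]: "(x::'a) + (x + y) = y" by (simp add: add.assoc[symmetric])
lemma sq_add: "((x::'a) + y) * (x + y) = x * x + y * y"
proof -
  have "(x+y)*(x+y) = x*x + y*y + (x*y + x*y)" by (simp add: algebra_simps)
  thus ?thesis by simp
qed

lemma v1: "v 1 = 0" using vmult[of 1 1] by simp
lemma vinv: "x \<noteq> 0 \<Longrightarrow> v (inverse x) = - v x"
  using vmult[of x "inverse x"] v1 by simp
lemma vpow: "x \<noteq> 0 \<Longrightarrow> v (x ^ k) = int k * v x"
  by (induction k) (auto simp: v1 vmult algebra_simps)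
lemma vsq: "x \<noteq> 0 \<Longrightarrow> v (x * x) = 2 * v x" using vmult by simp

lemma J0[simp]: "0 \<in> J n" by (simp add: J_def)
lemma J_add: "x \<in> J n \<Longrightarrow> y \<in> J n \<Longrightarrow> x + y \<in> J n"
  unfolding J_def using vultra[of x y] by (cases "x = 0"; cases "y = 0"; force)
lemma J_neg: "x \<in> J n \<Longrightarrow> - x \<in> J n" by simp
lemma J_diff: "x \<in> J n \<Longrightarrow> y \<in> J n \<Longrightarrow> x - y \<in> J n" by (simp add: minus_is_plus J_add)
lemma J_mult: "x \<in> J a \<Longrightarrow> y \<in> J b \<Longrightarrow> x * y \<in> J (a + b)"
  unfolding J_def using vmult[of x y] by (cases "x = 0"; cases "y = 0"; force)
lemma J_mono: "x \<in> J n \<Longrightarrow> m \<le> n \<Longrightarrow> x \<in> J m" by (auto simp: J_def)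
lemma J_self: "x \<noteq> 0 \<Longrightarrow> x \<in> J (v x)" by (simp add: J_def)
lemma J_notself: "x \<noteq> 0 \<Longrightarrow> x \<notin> J (v x + 1)" by (simp add: J_def)
lemma J_addnot: "x \<in> J n \<Longrightarrow> y \<notin> J n \<Longrightarrow> x + y \<notin> J n"
proof
  assume "x \<in> J n" "y \<notin> J n" "x + y \<in> J n"
  have "(x + y) + x \<in> J n" by (rule J_add[OF \<open>x + y \<in> J n\<close> \<open>x \<in> J n\<close>])
  moreover have "(x + y) + x = y" by (metis add.commute addself2)
  ultimately show False using \<open>y \<notin> J n\<close> by simp
qed
lemma notJ_v: "x \<notin> J n \<Longrightarrow> x \<noteq> 0 \<and> v x < n" by (auto simp: J_def)
lemma unit_v: "x \<in> J 0 \<Longrightarrow> x \<notin> J 1 \<Longrightarrow> x \<noteq> 0 \<and> v x = 0" by (auto simp: J_def)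
lemma v_eq_J: "x \<noteq> 0 \<Longrightarrow> v x = n \<longleftrightarrow> x \<in> J n \<and> x \<notin> J (n+1)" by (auto simp: J_def)

lemma unit_inv: "x \<in> J 0 \<Longrightarrow> x \<notin> J 1 \<Longrightarrow> inverse x \<in> J 0 \<and> inverse x \<notin> J 1"
  using vinv[of x] by (auto simp: J_iff)
lemma unit_mult: "x \<in> J 0 \<Longrightarrow> x \<notin> J 1 \<Longrightarrow> y \<in> J 0 \<Longrightarrow> y \<notin> J 1 \<Longrightarrow> x * y \<notin> J 1"
  using vmult[of x y] by (auto simp: J_iff)

end

locale vf = vb v for v :: "'a::field \<Rightarrow> int" +
  fixes T :: 'a and \<pi> :: 'a and R :: "'a set" and d :: nat
  assumes complete: "\<And>s::nat \<Rightarrow> 'a. (\<forall>n::int. \<exists>N. \<forall>i\<ge>N. \<forall>j\<ge>N. s i = s j \<or> v (s i - s j) \<ge> n) \<Longrightarrow>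
        (\<exists>l. \<forall>n::int. \<exists>N. \<forall>i\<ge>N. s i = l \<or> v (s i - l) \<ge> n)"
    and pi_nz: "\<pi> \<noteq> 0" and vpi: "v \<pi> = 1"
    and T_nz: "T \<noteq> 0" and vT: "v T = 0"
    and R_fin: "finite R" and R_O: "\<And>r. r \<in> R \<Longrightarrow> r = 0 \<or> 0 \<le> v r"
    and R_0: "0 \<in> R" and R_add: "\<And>a b. a \<in> R \<Longrightarrow> b \<in> R \<Longrightarrow> a + b \<in> R"
    and R_cover: "\<And>x. x = 0 \<or> 0 \<le> v x \<Longrightarrow> \<exists>r\<in>R. x - r = 0 \<or> 1 \<le> v (x - r)"
    and R_dist: "\<And>a b. a \<in> R \<Longrightarrow> b \<in> R \<Longrightarrow> a \<noteq> b \<Longrightarrow> v (a - b) < 1"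
    and R_card: "card R = 2 ^ d"
    and nonsq_R: "\<And>r. r \<in> R \<Longrightarrow> T - r * r \<noteq> 0 \<and> v (T - r * r) < 2"
begin

lemma pi_pow_nz: "\<pi> ^ k \<noteq> 0" using pi_nz by simp
lemma v_pi_pow: "v (\<pi> ^ k) = int k" using vpow[OF pi_nz] vpi by simp
lemma v_ipi_pow: "v (inverse (\<pi> ^ k)) = - int k" using vinv[OF pi_pow_nz] v_pi_pow by simp
lemma J_pi_pow: "x \<in> J n \<Longrightarrow> x * \<pi> ^ k \<in> J (n + int k)"
  using J_mult[of x n "\<pi>^k" "int k"] J_self[OF pi_pow_nz, of k] v_pi_pow by simp
lemma J_ipi_pow: "x \<in> J n \<Longrightarrow> x * inverse (\<pi> ^ k) \<in> J (n - int k)"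
  using J_mult[of x n "inverse (\<pi>^k)" "- int k"] J_self[of "inverse (\<pi>^k)"] pi_pow_nz v_ipi_pow by simp
lemma J_pi_pow_iff: "x * \<pi> ^ k \<in> J (n + int k) \<longleftrightarrow> x \<in> J n"
proof
  assume "x * \<pi> ^ k \<in> J (n + int k)"
  from J_ipi_pow[OF this, of k] show "x \<in> J n" using pi_pow_nz by (simp add: mult.assoc)
qed (rule J_pi_pow)
lemma J_ipi_pow_iff: "x * inverse (\<pi> ^ k) \<in> J (n - int k) \<longleftrightarrow> x \<in> J n"
proof
  assume "x * inverse (\<pi> ^ k) \<in> J (n - int k)"
  from J_pi_pow[OF this, of k] show "x \<in> J n" using pi_pow_nz by (simp add: mult.assoc)
qed (rule J_ipi_pow)

lemma T_J0: "T \<in> J 0" using vT by (simp add: J_def)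
lemma T_not_J1: "T \<notin> J 1" using vT T_nz by (simp add: J_def)
lemma iT_J0: "inverse T \<in> J 0" using vinv[OF T_nz] vT by (simp add: J_def)

end

context vf begin

declare minus_is_plus[simp] two0[simp]

lemma plus0_iff[simp]: "(x::'a) + y = 0 \<longleftrightarrow> x = y"
proof
  assume "x + y = 0"
  hence "x + (x + y) = x" by simp
  thus "x = y" by simp
qed simp

lemma J_addeq: "x \<in> J n \<Longrightarrow> y \<in> J n \<Longrightarrow> z = x + y \<Longrightarrow> z \<in> J n" using J_add by simp

lemma wp_surj: assumes a: "a \<in> J 1" shows "\<exists>Y. Y * Y + Y = a"
proof -
  define s where "s = rec_nat a (\<lambda>_ x. a + x * x)"
  have s0: "s 0 = a" and sS: "\<And>n. s (Suc n) = a + s n * s n" by (simp_all add: s_def)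
  have dd: "s (Suc n) + s n \<in> J (int n + 1)" for n
  proof (induction n)
    case 0
    have "s (Suc 0) + s 0 = a * a" by (simp add: s0 sS add.commute add.left_commute)
    moreover have "a * a \<in> J 2" using J_mult[OF a a] by simp
    ultimately show ?case by (simp add: J_mono)
  next
    case (Suc n)
    have "s (Suc (Suc n)) + s (Suc n) = (s (Suc n) + s n) * (s (Suc n) + s n)"
      using sS[of "Suc n"] sS[of n] by (simp add: sq_add algebra_simps two0)
    moreover have "\<dots> \<in> J (2 * (int n + 1))" using J_mult[OF Suc Suc] by (simp add: algebra_simps)
    ultimately show ?case by (auto intro: J_mono)
  qed
  have cauchy: "s i + s N \<in> J (int N + 1)" if "N \<le> i" for i N
    using that
  proof (induction i rule: dec_induct)
    case base then show ?case by simp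
  next
    case (step i)
    have "s (Suc i) + s i \<in> J (int N + 1)" using dd[of i] step(1) by (auto intro: J_mono)
    from J_addeq[OF this step(3)] show ?case by (simp add: add_ac)
  qed
  have "\<forall>n::int. \<exists>N. \<forall>i\<ge>N. \<forall>j\<ge>N. s i = s j \<or> v (s i - s j) \<ge> n"
  proof
    fix n :: int
    show "\<exists>N. \<forall>i\<ge>N. \<forall>j\<ge>N. s i = s j \<or> v (s i - s j) \<ge> n"
    proof (intro exI allI impI)
      fix i j assume "nat n \<le> i" "nat n \<le> j"
      from J_addeq[OF cauchy[OF \<open>nat n \<le> i\<close>] cauchy[OF \<open>nat n \<le> j\<close>], of "s i - s j"]
      have "s i - s j \<in> J (int (nat n) + 1)" by (simp add: add_ac)
      hence "s i - s j \<in> J n" by (rule J_mono) simp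
      thus "s i = s j \<or> v (s i - s j) \<ge> n" by (simp add: J_iff)
    qed
  qed
  from complete[OF this] obtain l where l: "\<forall>n::int. \<exists>N. \<forall>i\<ge>N. s i = l \<or> v (s i - l) \<ge> n" by blast
  define Z where "Z = l * l + l + a"
  have "Z = 0"
  proof (rule ccontr)
    assume Z0: "Z \<noteq> 0"
    define n where "n = max (v Z + 1) 1"
    from l obtain N where N: "\<forall>i\<ge>N. s i = l \<or> v (s i - l) \<ge> n" by blast
    define i where "i = max N (nat n)"
    define e where "e = s i + l"
    have e: "e \<in> J n" using N[rule_format, of i] by (auto simp: i_def e_def J_iff minus_is_plus)
    have le: "l = s i + e" by (simp add: e_def)
    have Zeq: "Z = (s (Suc i) + s i) + (e * e + e)"
      unfolding Z_def le sS by (simp add: sq_add algebra_simps)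
    have Z1: "s (Suc i) + s i \<in> J n" using dd[of i] by (rule J_mono) (simp add: i_def)
    have n1: "1 \<le> n" by (simp add: n_def)
    have "e * e \<in> J (n + n)" using J_mult[OF e e] .
    hence Z2: "e * e \<in> J n" using J_mono[of "e*e" "n+n" n] n1 by linarith
    have "Z \<in> J n" unfolding Zeq by (intro J_add Z1 Z2 e)
    moreover have "Z \<notin> J n" using J_notself[OF Z0] by (metis J_mono max.cobounded1 n_def)
    ultimately show False by simp
  qed
  have "l * l + l = (l * l + l + a) + a" by (simp add: add.assoc)
  also have "\<dots> = a" using \<open>Z = 0\<close> by (simp add: Z_def)
  finally show ?thesis by blast
qed

lemma R_J0: "r \<in> R \<Longrightarrow> r \<in> J 0" using R_O by (simp add: J_iff)
lemma R_J1_eq: "a \<in> R \<Longrightarrow> b \<in> R \<Longrightarrow> a - b \<in> J 1 \<Longrightarrow> a = b"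
proof (rule ccontr)
  assume "a \<in> R" "b \<in> R" "a - b \<in> J 1" "a \<noteq> b"
  thus False using R_dist[of a b] by (auto simp: J_iff)
qed

lemma diff3: "(x::'a) - y = (x - z) - (y - z)" by (simp add: algebra_simps)

lemma rep_ex1: "x \<in> J 0 \<Longrightarrow> \<exists>!r. r \<in> R \<and> x - r \<in> J 1"
proof -
  assume x: "x \<in> J 0"
  from R_cover[of x] x obtain r where "r \<in> R" "x - r \<in> J 1" by (auto simp: J_iff)
  moreover have "r1 = r2" if "r1 \<in> R" "x - r1 \<in> J 1" "r2 \<in> R" "x - r2 \<in> J 1" for r1 r2
  proof -
    have "r1 - r2 = (x - r2) - (x - r1)" by (simp add: algebra_simps)
    moreover have "(x - r2) - (x - r1) \<in> J 1" using J_diff[OF that(4) that(2)] .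
    ultimately have "r1 - r2 \<in> J 1" by (simp add: add.commute)
    thus ?thesis using R_J1_eq that by blast
  qed
  ultimately show ?thesis by blast
qed

definition rep :: "'a \<Rightarrow> 'a" where "rep x = (THE r. r \<in> R \<and> x - r \<in> J 1)"

lemma rep: "x \<in> J 0 \<Longrightarrow> rep x \<in> R \<and> x - rep x \<in> J 1"
  unfolding rep_def by (rule theI'[OF rep_ex1])
lemma rep_eq: "x \<in> J 0 \<Longrightarrow> r \<in> R \<Longrightarrow> x - r \<in> J 1 \<Longrightarrow> rep x = r"
  using rep rep_ex1 by blast
lemma rep_R: "r \<in> R \<Longrightarrow> rep r = r" using rep_eq R_J0 by simp
lemma rep_add: "x \<in> J 0 \<Longrightarrow> y \<in> J 0 \<Longrightarrow> rep (x + y) = rep x + rep y"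
proof -
  assume x: "x \<in> J 0" and y: "y \<in> J 0"
  have "x + y - (rep x + rep y) = (x - rep x) + (y - rep y)" by (simp add: algebra_simps)
  also have "\<dots> \<in> J 1" using rep[OF x] rep[OF y] by (simp add: J_add)
  finally show ?thesis using rep_eq[of "x+y"] x y rep[OF x] rep[OF y] R_add by (simp add: J_add)
qed
lemma rep_cong_iff: "x \<in> J 0 \<Longrightarrow> y \<in> J 0 \<Longrightarrow> rep x = rep y \<longleftrightarrow> x - y \<in> J 1"
proof
  assume x: "x \<in> J 0" and y: "y \<in> J 0"
  { assume "rep x = rep y"
    from J_addeq[of "x + rep x" 1 "y + rep y"] rep[OF x] rep[OF y] \<open>rep x = rep y\<close>
    show "x - y \<in> J 1" by (simp add: add_ac) }
  { assume "x - y \<in> J 1"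
    from J_addeq[of "x - y" 1 "y - rep y"] rep[OF y] \<open>x - y \<in> J 1\<close>
    have "x - rep y \<in> J 1" by (simp add: add_ac)
    thus "rep x = rep y" using rep_eq x rep[OF y] by blast }
qed
lemma rep_zero_iff: "x \<in> J 0 \<Longrightarrow> rep x = 0 \<longleftrightarrow> x \<in> J 1"
  using rep_cong_iff[of x 0] rep_R[OF R_0] by simp

lemma sq_J: "z * z \<in> J m \<Longrightarrow> z \<in> J ((m + 1) div 2)"
proof -
  assume "z * z \<in> J m"
  thus ?thesis
  proof (cases "z = 0")
    case False
    with \<open>z * z \<in> J m\<close> have "m \<le> 2 * v z" using vsq[OF False] by (auto simp: J_iff)
    hence "(m + 1) div 2 \<le> v z" by presburger
    thus ?thesis by (simp add: J_iff)
  qed simp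
qed

lemma sqrt_mod: assumes a: "a \<in> J 0" shows "\<exists>e\<in>R. a - e * e \<in> J 1"
proof -
  let ?f = "\<lambda>e. rep (e * e)"
  have sqJ0: "e \<in> R \<Longrightarrow> e * e \<in> J 0" for e using J_mult[OF R_J0 R_J0, of e e] by simp
  have sub: "?f ` R \<subseteq> R" using rep sqJ0 by blast
  have inj: "inj_on ?f R"
  proof (rule inj_onI)
    fix x y assume x: "x \<in> R" and y: "y \<in> R" and eq: "?f x = ?f y"
    hence "x * x - y * y \<in> J 1" using rep_cong_iff sqJ0 by blast
    moreover have "x * x - y * y = (x - y) * (x - y)" by (simp add: minus_is_plus sq_add)
    ultimately have "x - y \<in> J 1" using sq_J[of "x - y" 1] by simp
    thus "x = y" using R_J1_eq x y by blast
  qed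
  have "?f ` R = R" by (rule endo_inj_surj[OF R_fin sub inj])
  moreover have "rep a \<in> R" using rep[OF a] by blast
  ultimately have "rep a \<in> ?f ` R" by simp
  then obtain e where e: "e \<in> R" "rep (e * e) = rep a" by auto
  hence "a - e * e \<in> J 1" using rep_cong_iff[of a "e * e"] a sqJ0 by simp
  thus ?thesis using e by blast
qed

lemma nonsq: "T - s * s \<notin> J 2"
proof
  assume A: "T - s * s \<in> J 2"
  hence "T - s * s \<in> J 0" by (rule J_mono) simp
  hence "T - (T - s * s) \<in> J 0" by (rule J_diff[OF T_J0])
  hence "s * s \<in> J 0" by simp
  hence s: "s \<in> J 0" using sq_J[of s 0] by simp
  define r where "r = rep s"
  define z where "z = s - r"
  have r: "r \<in> R" and z: "z \<in> J 1" using rep[OF s] by (auto simp: r_def z_def)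
  have "T - r * r = (T - s * s) + z * z"
    unfolding z_def by (simp add: sq_add add_ac)
  moreover have "z * z \<in> J 2" using J_mult[OF z z] by simp
  ultimately have "T - r * r \<in> J 2" using J_add[OF A] by metis
  thus False using nonsq_R[OF r] by (auto simp: J_iff)
qed

lemma T_not_sq: "T \<noteq> s * s" using nonsq[of s] by auto

definition s0 :: 'a where "s0 = (SOME e. e \<in> R \<and> T - e * e \<in> J 1)"
definition h0 :: 'a where "h0 = (T - s0 * s0) * inverse \<pi>"

lemma s0_ex: "\<exists>e. e \<in> R \<and> T - e * e \<in> J 1" using sqrt_mod[OF T_J0] by blast
lemma s0: "s0 \<in> R" "T - s0 * s0 \<in> J 1"
  using someI_ex[OF s0_ex] unfolding s0_def by blast+
lemma s0_J0: "s0 \<in> J 0" using s0 R_J0 by blast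
lemma s0_not_J1: "s0 \<notin> J 1"
proof
  assume "s0 \<in> J 1"
  hence "s0 * s0 \<in> J 1" using J_mult[of s0 1 s0 1] J_mono by force
  have "(T - s0 * s0) + s0 * s0 \<in> J 1" by (rule J_add[OF s0(2) \<open>s0 * s0 \<in> J 1\<close>])
  thus False using T_not_J1 by simp
qed
lemma h0_pi: "h0 * \<pi> = T - s0 * s0" using pi_nz by (simp add: h0_def)
lemma h0_J0: "h0 \<in> J 0" using J_pi_pow_iff[of h0 1 0] h0_pi s0(2) by simp
lemma h0_not_J1: "h0 \<notin> J 1" using J_pi_pow_iff[of h0 1 1] h0_pi nonsq[of s0] by simp


definition G :: "'a set" where "G = {T * u * u + Y * Y + Y | u Y. True}"

lemma G_0: "0 \<in> G" unfolding G_def by (rule CollectI, rule exI[of _ 0], rule exI[of _ 0]) simp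
lemma G_add: "x \<in> G \<Longrightarrow> y \<in> G \<Longrightarrow> x + y \<in> G"
proof -
  assume "x \<in> G" "y \<in> G"
  then obtain u1 Y1 u2 Y2 where x: "x = T * u1 * u1 + Y1 * Y1 + Y1" and y: "y = T * u2 * u2 + Y2 * Y2 + Y2"
    unfolding G_def by blast
  have "x + y = T * (u1 + u2) * (u1 + u2) + (Y1 + Y2) * (Y1 + Y2) + (Y1 + Y2)"
    unfolding x y mult.assoc sq_add by (simp add: algebra_simps)
  thus ?thesis unfolding G_def by blast
qed
lemma G_diff: "x \<in> G \<Longrightarrow> y \<in> G \<Longrightarrow> x - y \<in> G" by (simp add: minus_is_plus G_add)
lemma J1_G: "a \<in> J 1 \<Longrightarrow> a \<in> G"
  using wp_surj[of a] unfolding G_def by (metis (mono_tags, lifting) CollectI add_0 mult_zero_right)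
lemma J0_G: assumes a: "a \<in> J 0" shows "a \<in> G"
proof -
  have "a * inverse T \<in> J 0" using J_mult[OF a iT_J0] by simp
  from sqrt_mod[OF this] obtain e where e: "e \<in> R" "a * inverse T - e * e \<in> J 1" by blast
  have "(a * inverse T - e * e) * T \<in> J 1" using J_mult[OF e(2) T_J0] by simp
  moreover have "(a * inverse T - e * e) * T = a - T * e * e" using T_nz by (simp add: algebra_simps)
  ultimately have "a - T * e * e \<in> G" using J1_G by simp
  moreover have "T * e * e \<in> G" unfolding G_def by (rule CollectI, rule exI[of _ e], rule exI[of _ 0]) simp
  ultimately have "(a - T * e * e) + T * e * e \<in> G" by (rule G_add)
  thus ?thesis by simp
qed

lemma conic_iff: "conic_has_point T y \<longleftrightarrow> y \<in> G"
proof
  assume "conic_has_point T y"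
  then obtain x0 x1 x2 where nz: "(x0, x1, x2) \<noteq> (0, 0, 0)" and eq: "x0^2 + x0 * x1 + y * x1^2 = T * x2^2"
    unfolding conic_has_point_def by blast
  show "y \<in> G"
  proof (cases "x1 = 0")
    case True
    with eq have eq2: "x0 * x0 = T * (x2 * x2)" by (simp add: power2_eq_square)
    show ?thesis
    proof (cases "x2 = 0")
      case True with eq2 nz \<open>x1 = 0\<close> show ?thesis by simp
    next
      case False
      hence "T = (x0 / x2) * (x0 / x2)" using eq2 by (simp add: field_simps)
      thus ?thesis using T_not_sq by blast
    qed
  next
    case False
    define u where "u = x2 / x1"
    define Y where "Y = x0 / x1"
    have "(x0^2 + x0 * x1 + y * x1^2) / (x1 * x1) = T * x2^2 / (x1 * x1)" using eq by simp
    hence "Y * Y + Y + y = T * u * u" using False unfolding u_def Y_def by (simp add: field_simps power2_eq_square)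
    hence "y = T * u * u + Y * Y + Y" by (metis addself2 add.commute add.left_commute)
    thus ?thesis unfolding G_def by blast
  qed
next
  assume "y \<in> G"
  then obtain u Y where y: "y = T * u * u + Y * Y + Y" unfolding G_def by blast
  have "Y^2 + Y * 1 + y * 1^2 = T * u^2"
    unfolding y by (simp add: power2_eq_square algebra_simps)
  thus "conic_has_point T y" unfolding conic_has_point_def
    by (intro exI[of _ Y] exI[of _ 1] exI[of _ u]) simp
qed

end

lemma fid_even: "(T::'b::field) \<noteq> 0 \<Longrightarrow> q \<noteq> 0 \<Longrightarrow>
  (y * (q * q) * inverse T - e * e) * T = (y - T * (e * inverse q) * (e * inverse q)) * (q * q)"
  by (simp add: field_simps)
lemma fid_odd: "(h::'b::field) \<noteq> 0 \<Longrightarrow> q \<noteq> 0 \<Longrightarrow> p \<noteq> 0 \<Longrightarrow>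
  (y - ((h * p) * (e * inverse (q * p)) * (e * inverse (q * p)) + s * (e * inverse (q * p)))) * (q * q * p)
   = (y * (q * q * p) * inverse h - e * e) * h - s * e * q"
  by (simp add: field_simps)

context vf begin

lemma v_add_strict: assumes a: "a \<noteq> 0" and b: "b = 0 \<or> v a < v b"
  shows "a + b \<noteq> 0 \<and> v (a + b) = v a"
proof -
  have "a \<notin> J (v a + 1)" using J_notself[OF a] .
  moreover have "b \<in> J (v a + 1)" using b by (auto simp: J_iff)
  ultimately have n: "a + b \<notin> J (v a + 1)" using J_addnot[of b "v a + 1" a] by (simp add: add.commute)
  have "a + b \<in> J (v a)" using J_self[OF a] b by (intro J_add) (auto simp: J_iff)
  with n show ?thesis by (auto simp: J_iff)
qed

lemma v_ultra_nz: "a \<noteq> 0 \<Longrightarrow> b \<noteq> 0 \<Longrightarrow> a + b \<noteq> 0 \<Longrightarrow> v (a + b) \<ge> min (v a) (v b)"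
  using vultra by blast

lemma v_add_cases: assumes a: "a \<noteq> 0" and b: "b \<noteq> 0" and ab: "a + b \<noteq> 0"
  shows "(v a \<noteq> v b \<longrightarrow> v (a + b) = min (v a) (v b)) \<and> v (a + b) \<ge> min (v a) (v b)"
proof -
  have "v a < v b \<Longrightarrow> v (a + b) = v a" using v_add_strict[OF a] by simp
  moreover have "v b < v a \<Longrightarrow> v (a + b) = v b" using v_add_strict[OF b, of a] by (simp add: add.commute)
  ultimately show ?thesis using vultra[OF a b ab]
    by (cases "v a < v b"; cases "v b < v a") (auto simp: min_def)
qed

lemma J_rho: "x \<in> J n \<Longrightarrow> x * inverse \<pi> \<in> J (n - 1)"
  using J_ipi_pow[of x n 1] by simp
lemma J_pi: "x \<in> J n \<Longrightarrow> x * \<pi> \<in> J (n + 1)"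
  using J_pi_pow[of x n 1] by simp
lemma J_pi_iff: "x * \<pi> \<in> J (n + 1) \<longleftrightarrow> x \<in> J n"
  using J_pi_pow_iff[of x 1 n] by simp

lemma reduce_step:
  assumes y: "y \<in> J (- int j)" and j: "2 \<le> j"
  shows "\<exists>g\<in>G. g \<in> J (- int j) \<and> y - g \<in> J (1 - int j)"
proof -
  define c where "c = y * \<pi> ^ j"
  have c: "c \<in> J 0" using J_pi_pow[OF y, of j] by (simp add: c_def)
  have key: "y - g \<in> J (1 - int j)" if "(y - g) * \<pi> ^ j \<in> J 1" for g
    using J_pi_pow_iff[of "y - g" j "1 - int j"] that by simp
  have fin: "\<exists>g\<in>G. y - g \<in> J (1 - int j)"
  proof (cases "even j")
    case True
    define i where "i = j div 2"
    have ji: "j = 2 * i" using True by (simp add: i_def)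
    define q where "q = \<pi> ^ i"
    have qnz: "q \<noteq> 0" using pi_pow_nz by (simp add: q_def)
    have pj: "\<pi> ^ j = q * q" unfolding ji q_def by (simp only: mult_2 power_add)
    have "c * inverse T \<in> J 0" using J_mult[OF c iT_J0] by simp
    from sqrt_mod[OF this] obtain e where e: "e \<in> R" "c * inverse T - e * e \<in> J 1" by blast
    define u where "u = e * inverse q"
    define g where "g = T * u * u"
    have gG: "g \<in> G" unfolding G_def g_def by (rule CollectI, rule exI[of _ u], rule exI[of _ 0]) simp
    have "(c * inverse T - e * e) * T \<in> J 1" using J_mult[OF e(2) T_J0] by simp
    moreover have "(c * inverse T - e * e) * T = (y - g) * \<pi> ^ j"
      unfolding c_def pj g_def u_def by (rule fid_even[OF T_nz qnz])
    ultimately show ?thesis using gG key by auto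
  next
    case False
    define i where "i = j div 2"
    have ji: "j = Suc (2 * i)" using False unfolding i_def by presburger
    with j have i1: "1 \<le> i" by simp
    define q where "q = \<pi> ^ i"
    have qnz: "q \<noteq> 0" using pi_pow_nz by (simp add: q_def)
    have pj: "\<pi> ^ j = q * q * \<pi>" unfolding ji q_def by (simp only: power_Suc2 mult_2 power_add)
    have h0u: "inverse h0 \<in> J 0" using unit_inv[OF h0_J0 h0_not_J1] by simp
    have h0nz: "h0 \<noteq> 0" using h0_not_J1 by auto
    have "c * inverse h0 \<in> J 0" using J_mult[OF c h0u] by simp
    from sqrt_mod[OF this] obtain e where e: "e \<in> R" "c * inverse h0 - e * e \<in> J 1" by blast
    define u where "u = e * inverse (q * \<pi>)"
    define Y where "Y = s0 * u"
    define g where "g = T * u * u + Y * Y + Y"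
    have gG: "g \<in> G" unfolding G_def g_def by blast
    have geq: "g = (h0 * \<pi>) * u * u + s0 * u" unfolding g_def Y_def h0_pi by (simp add: algebra_simps)
    have eq: "(y - g) * \<pi> ^ j = (c * inverse h0 - e * e) * h0 - s0 * e * q"
      unfolding geq c_def pj u_def by (rule fid_odd[OF h0nz qnz pi_nz])
    have "(c * inverse h0 - e * e) * h0 \<in> J 1" using J_mult[OF e(2) h0_J0] by simp
    moreover have "s0 * e * q \<in> J 1"
    proof -
      have "s0 * e * q \<in> J (0 + int i)" unfolding q_def
        using J_pi_pow[OF J_mult[OF s0_J0 R_J0[OF e(1)]]] by simp
      thus ?thesis by (rule J_mono) (use i1 in simp)
    qed
    ultimately have "(c * inverse h0 - e * e) * h0 - s0 * e * q \<in> J 1" by (rule J_diff)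
    hence "(y - g) * \<pi> ^ j \<in> J 1" by (simp only: eq)
    thus ?thesis using gG key by auto
  qed
  then obtain g where g: "g \<in> G" "y - g \<in> J (1 - int j)" by blast
  have "y - g \<in> J (- int j)" using g(2) by (rule J_mono) simp
  hence "y - (y - g) \<in> J (- int j)" using y J_diff by blast
  hence "g \<in> J (- int j)" by (simp add: add_ac)
  thus ?thesis using g by blast
qed

lemma reduce_all: "y \<in> J (- int k) \<Longrightarrow> \<exists>g\<in>G. g \<in> J (- int k) \<and> y - g \<in> J (- 1)"
proof (induction k arbitrary: y)
  case 0
  have "y - 0 \<in> J (- 1)" using J_mono[OF 0[simplified]] by simp
  thus ?case using G_0 by force
next
  case (Suc m)
  show ?case
  proof (cases "y \<in> J (- int m)")
    case True
    from Suc.IH[OF this] obtain g where "g \<in> G" "g \<in> J (- int m)" "y - g \<in> J (- 1)" by blast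
    moreover have "g \<in> J (- int (Suc m))" using J_mono[OF \<open>g \<in> J (- int m)\<close>] by simp
    ultimately show ?thesis by blast
  next
    case False
    show ?thesis
    proof (cases "m = 0")
      case True
      have "y - 0 \<in> J (- 1)" using Suc.prems True by simp
      thus ?thesis using G_0 J0 by blast
    next
      case False
      hence "2 \<le> Suc m" by simp
      from reduce_step[OF Suc.prems this] obtain g1 where g1: "g1 \<in> G" "g1 \<in> J (- int (Suc m))"
        "y - g1 \<in> J (1 - int (Suc m))" by blast
      have "y - g1 \<in> J (- int m)" using g1(3) by simp
      from Suc.IH[OF this] obtain g2 where g2: "g2 \<in> G" "g2 \<in> J (- int m)" "y - g1 - g2 \<in> J (- 1)" by blast
      have "g1 + g2 \<in> G" using g1 g2 G_add by blast
      moreover have "g1 + g2 \<in> J (- int (Suc m))" using g1(2) J_mono[OF g2(2), of "- int (Suc m)"] by (intro J_add) auto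
      moreover have "y - (g1 + g2) \<in> J (- 1)" using g2(3) by (simp add: add_ac)
      ultimately show ?thesis by blast
    qed
  qed
qed

lemma analysis:
  assumes xG: "x \<in> G" and x1: "x \<in> J (- 1)" and x0: "x \<notin> J 0"
  shows "\<exists>e\<in>J 0. \<pi> * x - (h0 * e * e + s0 * e) \<in> J 1"
proof -
  obtain u Y where x: "x = T * u * u + Y * Y + Y" using xG unfolding G_def by blast
  have xnz: "x \<noteq> 0" and vx: "v x = -1" using x0 x1 by (auto simp: J_iff)
  have Y0: "Y \<notin> J 0"
  proof
    assume Y: "Y \<in> J 0"
    hence "Y * Y + Y \<in> J 0" using J_mult[OF Y Y] J_add by simp
    hence "(Y * Y + Y) + x \<notin> J 0" using J_addnot x0 by blast
    moreover have "(Y * Y + Y) + x = T * u * u" unfolding x by (simp add: add_ac)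
    ultimately have "T * u * u \<notin> J 0" by simp
    hence unz: "u \<noteq> 0" by auto
    have "T * u * u = (Y * Y + Y) + x" unfolding x by (simp add: add_ac)
    hence "T * u * u \<in> J (- 1)" using J_add[OF J_mono[OF \<open>Y * Y + Y \<in> J 0\<close>] x1] by simp
    with \<open>T * u * u \<notin> J 0\<close> have "v (T * u * u) = - 1" by (auto simp: J_iff)
    moreover have "v (T * u * u) = 2 * v u" using vmult T_nz unz vT by (simp add: mult.assoc)
    ultimately show False by presburger
  qed
  have Ynz: "Y \<noteq> 0" and vY: "v Y < 0" using Y0 by (auto simp: J_iff)
  have unz: "u \<noteq> 0"
  proof
    assume "u = 0"
    hence xe: "x = Y * Y + Y" using x by simp
    have "v (Y * Y) < v Y" using vsq[OF Ynz] vY by simp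
    hence "v x = v (Y * Y)" using v_add_strict[of "Y * Y" Y] Ynz xe by simp
    thus False using vsq[OF Ynz] vY vx by simp
  qed
  define s where "s = Y / u"
  have Ys: "Y = s * u" using unz by (simp add: s_def)
  have snz: "s \<noteq> 0" using Ynz Ys by auto
  define P where "P = (T - s * s) * u * u"
  have xP: "x = P + Y" unfolding x P_def Ys by (simp add: algebra_simps)
  have Tss: "T - s * s \<noteq> 0" using T_not_sq[of s] by simp
  define m where "m = v (T - s * s)"
  have m2: "m \<le> 1" using nonsq[of s] Tss by (auto simp: J_iff m_def)
  have mneg: "v s < 0 \<Longrightarrow> m = 2 * v s"
  proof -
    assume "v s < 0"
    hence "v (s * s) < v T" using vsq[OF snz] vT by simp
    hence "v (s * s + T) = v (s * s)" using v_add_strict[of "s * s" T] snz by simp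
    thus ?thesis using vsq[OF snz] by (simp add: m_def add.commute)
  qed
  have mpos: "0 \<le> v s \<Longrightarrow> 0 \<le> m"
  proof -
    assume "0 \<le> v s"
    hence "s \<in> J 0" by (simp add: J_iff)
    moreover have "s * s \<in> J 0" using J_mult[OF \<open>s \<in> J 0\<close> \<open>s \<in> J 0\<close>] by simp
    ultimately have "T - s * s \<in> J 0" using J_diff[OF T_J0] by blast
    thus ?thesis using Tss by (simp add: J_iff m_def)
  qed
  have Pnz: "P \<noteq> 0" using Tss unz by (simp add: P_def)
  have vP: "v P = m + 2 * v u" using vmult Tss unz by (simp add: P_def m_def mult.assoc)
  have vYsu: "v Y = v s + v u" using vmult snz unz Ys by simp
  have xPY: "P + Y \<noteq> 0" using xnz xP by simp
  have c1: "v P \<noteq> v Y \<longrightarrow> v x = min (v P) (v Y)" using v_add_cases[OF Pnz Ynz xPY] xP by simp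
  have ar: "v s = 0 \<and> v u = -1 \<and> m = 1"
    using c1 vP vYsu vx mneg mpos m2 vY by (cases "v s < 0") (auto split: if_splits simp: min_def)
  define e where "e = \<pi> * u"
  have vs0: "v s = 0" and vu: "v u = -1" and m1: "m = 1" using ar by auto
  have sJ0: "s \<in> J 0" using vs0 by (simp add: J_iff)
  have eJ0: "e \<in> J 0" using vmult[OF pi_nz unz] vpi vu by (simp add: J_iff e_def)
  have TsJ1: "T - s * s \<in> J 1" using m1 by (simp add: J_iff m_def)
  define h where "h = (T - s * s) * inverse \<pi>"
  have pix: "\<pi> * x = h * e * e + s * e"
    unfolding xP P_def Ys h_def e_def using pi_nz by (simp add: field_simps)
  have ssq: "(s - s0) * (s - s0) \<in> J 1"
  proof -
    have "(T - s * s) + (T - s0 * s0) \<in> J 1" using J_add[OF TsJ1 s0(2)] .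
    moreover have "(T - s * s) + (T - s0 * s0) = (s - s0) * (s - s0)" by (simp add: sq_add add_ac)
    ultimately show ?thesis by simp
  qed
  hence ss1: "s - s0 \<in> J 1" using sq_J[of "s - s0" 1] by simp
  have hh: "h - h0 \<in> J 1"
  proof -
    have "(s - s0) * (s - s0) \<in> J 2" using J_mult[OF ss1 ss1] by simp
    hence "(s - s0) * (s - s0) * inverse \<pi> \<in> J 1" using J_rho[of _ 2] by simp
    moreover have "(s - s0) * (s - s0) * inverse \<pi> = h - h0"
      unfolding h_def h0_def by (simp add: sq_add algebra_simps)
    ultimately show ?thesis by simp
  qed
  have eq: "\<pi> * x - (h0 * e * e + s0 * e) = (h - h0) * (e * e) + (s - s0) * e"
    unfolding pix by (simp add: algebra_simps)
  have mem: "(h - h0) * (e * e) + (s - s0) * e \<in> J 1"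
    using J_mult[OF hh J_mult[OF eJ0 eJ0]] J_mult[OF ss1 eJ0] by (intro J_add) simp_all
  have "\<pi> * x - (h0 * e * e + s0 * e) \<in> J 1" by (metis eq mem)
  thus ?thesis using eJ0 by blast
qed

end

lemma fid_g: "(p::'b::field) \<noteq> 0 \<Longrightarrow>
  (h * p) * (e * inverse p) * (e * inverse p) + s * (e * inverse p) = (h * e * e + s * e) * inverse p"
  by (simp add: field_simps)
lemma fid_x: "(p::'b::field) \<noteq> 0 \<Longrightarrow> x - A * inverse p = (p * x - A) * inverse p"
  by (simp add: field_simps)

context vf begin

definition fq :: "'a \<Rightarrow> 'a" where "fq e = rep (h0 * e * e + s0 * e)"

lemma fq_arg: "e \<in> J 0 \<Longrightarrow> h0 * e * e + s0 * e \<in> J 0"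
proof -
  assume e: "e \<in> J 0"
  have "h0 * e * e \<in> J 0" using J_mult[OF J_mult[OF h0_J0 e] e] by simp
  moreover have "s0 * e \<in> J 0" using J_mult[OF s0_J0 e] by simp
  ultimately show ?thesis by (rule J_add)
qed

lemma fq_R: "e \<in> R \<Longrightarrow> fq e \<in> R" unfolding fq_def using rep fq_arg R_J0 by blast

lemma fq_add: assumes a: "a \<in> R" and b: "b \<in> R" shows "fq (a + b) = fq a + fq b"
proof -
  have "h0 * (a + b) * (a + b) + s0 * (a + b) = (h0 * a * a + s0 * a) + (h0 * b * b + s0 * b)"
    unfolding mult.assoc sq_add by (simp add: algebra_simps)
  thus ?thesis unfolding fq_def using rep_add fq_arg R_J0 a b by simp
qed

lemma fq_0: "fq 0 = 0" unfolding fq_def using rep_R[OF R_0] by simp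

definition e1 :: 'a where "e1 = rep (s0 * inverse h0)"

lemma sh_J0: "s0 * inverse h0 \<in> J 0" using J_mult[OF s0_J0 conjunct1[OF unit_inv[OF h0_J0 h0_not_J1]]] by simp
lemma sh_not_J1: "s0 * inverse h0 \<notin> J 1"
  using unit_mult[OF s0_J0 s0_not_J1] unit_inv[OF h0_J0 h0_not_J1] by blast

lemma e1_R: "e1 \<in> R" unfolding e1_def using rep[OF sh_J0] by blast
lemma e1_nz: "e1 \<noteq> 0" unfolding e1_def using rep_zero_iff[OF sh_J0] sh_not_J1 by blast
lemma e1_diff: "e1 - s0 * inverse h0 \<in> J 1"
  using rep[OF sh_J0] unfolding e1_def by (simp add: add.commute)

lemma h0nz: "h0 \<noteq> 0" using h0_not_J1 by auto

lemma fq_e1: "fq e1 = 0"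
proof -
  have "h0 * e1 * e1 + s0 * e1 = (e1 * h0) * (e1 - s0 * inverse h0)"
    using h0nz by (simp add: algebra_simps)
  moreover have "(e1 * h0) * (e1 - s0 * inverse h0) \<in> J 1"
    using J_mult[OF J_mult[OF R_J0[OF e1_R] h0_J0] e1_diff] by simp
  ultimately have "h0 * e1 * e1 + s0 * e1 \<in> J 1" by simp
  thus ?thesis unfolding fq_def using rep_zero_iff fq_arg R_J0 e1_R by blast
qed

lemma fq_ker: assumes a: "a \<in> R" and fa: "fq a = 0" shows "a = 0 \<or> a = e1"
proof -
  have aJ: "a \<in> J 0" using R_J0[OF a] .
  have "h0 * a * a + s0 * a \<in> J 1" using fa rep_zero_iff fq_arg[OF aJ] unfolding fq_def by blast
  moreover have "h0 * a * a + s0 * a = a * (h0 * a + s0)" by (simp add: algebra_simps)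
  ultimately have prod: "a * (h0 * a + s0) \<in> J 1" by simp
  have "h0 * a \<in> J 0" using J_mult[OF h0_J0 aJ] by simp
  hence hJ: "h0 * a + s0 \<in> J 0" using J_add s0_J0 by blast
  show ?thesis
  proof (cases "a \<in> J 1")
    case True
    hence "a - 0 \<in> J 1" by simp
    thus ?thesis using R_J1_eq[OF a R_0] by blast
  next
    case False
    hence "h0 * a + s0 \<in> J 1" using unit_mult[OF aJ False hJ] prod by blast
    hence "(h0 * a + s0) * inverse h0 \<in> J 1"
      using J_mult[of _ 1 "inverse h0" 0] unit_inv[OF h0_J0 h0_not_J1] by fastforce
    moreover have "(h0 * a + s0) * inverse h0 = a + s0 * inverse h0" using h0nz by (simp add: algebra_simps)
    ultimately have "a + s0 * inverse h0 \<in> J 1" by simp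
    hence "(a + s0 * inverse h0) + (e1 - s0 * inverse h0) \<in> J 1" using e1_diff J_add by blast
    hence "a - e1 \<in> J 1" by (simp add: add_ac)
    thus ?thesis using R_J1_eq[OF a e1_R] by blast
  qed
qed

lemma fib: assumes a0: "a0 \<in> R" shows "{a \<in> R. fq a = fq a0} = {a0, a0 + e1}"
proof
  show "{a \<in> R. fq a = fq a0} \<subseteq> {a0, a0 + e1}"
  proof
    fix a assume "a \<in> {a \<in> R. fq a = fq a0}"
    hence a: "a \<in> R" "fq a = fq a0" by auto
    have "fq (a + a0) = 0" using fq_add[OF a(1) a0] a(2) by simp
    hence "a + a0 = 0 \<or> a + a0 = e1" using fq_ker R_add[OF a(1) a0] by blast
    moreover have "a + a0 = e1 \<Longrightarrow> a = a0 + e1" by (metis addself2 add.commute)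
    ultimately show "a \<in> {a0, a0 + e1}" by auto
  qed
next
  show "{a0, a0 + e1} \<subseteq> {a \<in> R. fq a = fq a0}"
    using a0 R_add[OF a0 e1_R] fq_add[OF a0 e1_R] fq_e1 by auto
qed

lemma card_fq: "card R = 2 * card (fq ` R)"
proof -
  define F where "F y = {a \<in> R. fq a = y}" for y
  have RU: "R = (\<Union>y\<in>fq ` R. F y)" unfolding F_def by auto
  have c2: "card (F y) = 2" if "y \<in> fq ` R" for y
  proof -
    from that obtain a0 where a0: "a0 \<in> R" "y = fq a0" by blast
    have "F y = {a0, a0 + e1}" unfolding F_def a0(2) by (rule fib[OF a0(1)])
    moreover have "a0 \<noteq> a0 + e1" using e1_nz by simp
    ultimately show ?thesis by simp
  qed
  have "card (\<Union>y\<in>fq ` R. F y) = (\<Sum>y\<in>fq ` R. card (F y))"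
    by (rule card_UN_disjoint) (use R_fin in \<open>auto simp: F_def\<close>)
  also have "\<dots> = (\<Sum>y\<in>fq ` R. 2)" using c2 by simp
  finally show ?thesis using RU by simp
qed

lemma fq_sub: "fq ` R \<subseteq> R" using fq_R by blast

lemma fq_compl: assumes c1: "c1 \<in> R" "c1 \<notin> fq ` R" and c2: "c2 \<in> R" "c2 \<notin> fq ` R"
  shows "c1 + c2 \<in> fq ` R"
proof -
  let ?S = "fq ` R"
  have finS: "finite ?S" using R_fin by simp
  have sub: "(\<lambda>y. c1 + y) ` ?S \<subseteq> R - ?S"
  proof
    fix z assume "z \<in> (\<lambda>y. c1 + y) ` ?S"
    then obtain b where b: "b \<in> R" "z = c1 + fq b" by blast
    have zR: "z \<in> R" using R_add[OF c1(1) fq_R[OF b(1)]] b(2) by simp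
    have "z \<notin> ?S"
    proof
      assume "z \<in> ?S"
      then obtain a where a: "a \<in> R" "z = fq a" by blast
      have "c1 = fq a + fq b" using a(2) b(2) by (metis addself2 add.commute)
      also have "\<dots> = fq (a + b)" using fq_add[OF a(1) b(1)] by simp
      finally show False using c1(2) R_add[OF a(1) b(1)] by blast
    qed
    thus "z \<in> R - ?S" using zR by blast
  qed
  have inj: "inj_on (\<lambda>y. c1 + y) ?S" by (rule inj_onI) simp
  have "card ((\<lambda>y. c1 + y) ` ?S) = card ?S" using card_image[OF inj] .
  also have "\<dots> = card (R - ?S)" using card_fq card_Diff_subset[OF finS fq_sub] by simp
  finally have "(\<lambda>y. c1 + y) ` ?S = R - ?S"
    using card_subset_eq[OF _ sub] R_fin by blast
  hence "c2 \<in> (\<lambda>y. c1 + y) ` ?S" using c2 by blast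
  then obtain y where y: "y \<in> ?S" "c2 = c1 + y" by blast
  thus ?thesis by simp
qed

lemma fq_notall: "\<exists>c\<in>R. c \<notin> fq ` R"
proof (rule ccontr)
  assume "\<not> ?thesis"
  hence "fq ` R = R" using fq_sub by blast
  hence "card R = 2 * card R" using card_fq by simp
  moreover have "card R \<noteq> 0" using R_fin R_0 by auto
  ultimately show False by simp
qed

lemma piJ0: "x \<in> J (- 1) \<Longrightarrow> \<pi> * x \<in> J 0"
  using J_pi[of x "- 1"] by (simp add: mult.commute)

lemma G_J1_rep: assumes xG: "x \<in> G" and x1: "x \<in> J (- 1)" shows "rep (\<pi> * x) \<in> fq ` R"
proof (cases "x \<in> J 0")
  case True
  hence "\<pi> * x \<in> J 1" using J_pi[OF True] by (simp add: mult.commute)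
  hence "rep (\<pi> * x) = fq 0" using rep_zero_iff piJ0[OF x1] fq_0 by simp
  thus ?thesis using R_0 by blast
next
  case False
  from analysis[OF xG x1 False] obtain e where e: "e \<in> J 0" "\<pi> * x - (h0 * e * e + s0 * e) \<in> J 1" by blast
  define e' where "e' = rep e"
  have e': "e' \<in> R" "e - e' \<in> J 1" using rep[OF e(1)] by (auto simp: e'_def)
  have "(h0 * e * e + s0 * e) - (h0 * e' * e' + s0 * e') = h0 * ((e - e') * (e - e')) + s0 * (e - e')"
    unfolding mult.assoc sq_add by (simp add: algebra_simps)
  moreover have "h0 * ((e - e') * (e - e')) + s0 * (e - e') \<in> J 1"
    using J_mult[OF h0_J0 J_mult[OF e'(2) e'(2)]] J_mult[OF s0_J0 e'(2)] J_mono by (intro J_add) force+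
  ultimately have d: "(h0 * e * e + s0 * e) - (h0 * e' * e' + s0 * e') \<in> J 1" by simp
  have "\<pi> * x - (h0 * e' * e' + s0 * e') \<in> J 1"
    using J_add[OF e(2) d] by (simp add: add_ac)
  hence "rep (\<pi> * x) = fq e'" unfolding fq_def
    using rep_cong_iff[OF piJ0[OF x1] fq_arg[OF R_J0[OF e'(1)]]] by simp
  thus ?thesis using e'(1) by blast
qed

lemma rep_G: assumes x1: "x \<in> J (- 1)" and r: "rep (\<pi> * x) \<in> fq ` R" shows "x \<in> G"
proof -
  from r obtain e where e: "e \<in> R" "rep (\<pi> * x) = fq e" by blast
  have d: "\<pi> * x - (h0 * e * e + s0 * e) \<in> J 1"
    using e(2) rep_cong_iff[OF piJ0[OF x1] fq_arg[OF R_J0[OF e(1)]]] unfolding fq_def by simp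
  define u where "u = e * inverse \<pi>"
  define Y where "Y = s0 * u"
  define g where "g = T * u * u + Y * Y + Y"
  have gG: "g \<in> G" unfolding G_def g_def by blast
  have "g = (h0 * \<pi>) * u * u + s0 * u" unfolding g_def Y_def h0_pi by (simp add: algebra_simps)
  also have "\<dots> = (h0 * e * e + s0 * e) * inverse \<pi>" unfolding u_def by (rule fid_g[OF pi_nz])
  finally have geq: "g = (h0 * e * e + s0 * e) * inverse \<pi>" .
  have "x - g = (\<pi> * x - (h0 * e * e + s0 * e)) * inverse \<pi>" unfolding geq by (rule fid_x[OF pi_nz])
  moreover have "(\<pi> * x - (h0 * e * e + s0 * e)) * inverse \<pi> \<in> J 0" using J_rho[OF d] by simp
  ultimately have "x - g \<in> G" using J0_G by simp
  hence "(x - g) + g \<in> G" using gG G_add by blast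
  thus ?thesis by simp
qed

lemma idx2: assumes x1: "x1 \<in> J (- 1)" "x1 \<notin> G" and x2: "x2 \<in> J (- 1)" "x2 \<notin> G"
  shows "x1 + x2 \<in> G"
proof -
  have r1: "rep (\<pi> * x1) \<in> R" "rep (\<pi> * x1) \<notin> fq ` R" using rep[OF piJ0[OF x1(1)]] rep_G x1 by blast+
  have r2: "rep (\<pi> * x2) \<in> R" "rep (\<pi> * x2) \<notin> fq ` R" using rep[OF piJ0[OF x2(1)]] rep_G x2 by blast+
  have "rep (\<pi> * (x1 + x2)) = rep (\<pi> * x1) + rep (\<pi> * x2)"
    using rep_add[OF piJ0[OF x1(1)] piJ0[OF x2(1)]] by (simp add: distrib_left)
  hence "rep (\<pi> * (x1 + x2)) \<in> fq ` R" using fq_compl[OF r1 r2] by simp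
  thus ?thesis using rep_G J_add[OF x1(1) x2(1)] by blast
qed

lemma x0_ex: "\<exists>x. x \<in> J (- 1) \<and> x \<notin> G"
proof -
  from fq_notall obtain c where c: "c \<in> R" "c \<notin> fq ` R" by blast
  define x where "x = c * inverse \<pi>"
  have x1: "x \<in> J (- 1)" using J_rho[OF R_J0[OF c(1)]] by (simp add: x_def)
  have "\<pi> * x = c" using pi_nz by (simp add: x_def)
  hence "rep (\<pi> * x) \<notin> fq ` R" using rep_R[OF c(1)] c(2) by simp
  hence "x \<notin> G" using G_J1_rep x1 by blast
  thus ?thesis using x1 by blast
qed

definition x0 :: 'a where "x0 = (SOME x. x \<in> J (- 1) \<and> x \<notin> G)"
lemma x0: "x0 \<in> J (- 1)" "x0 \<notin> G" using someI_ex[OF x0_ex] unfolding x0_def by blast+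

definition H :: "nat \<Rightarrow> 'a set" where "H k = G \<inter> J (- int k)"

lemma H_cover: assumes k: "1 \<le> k" shows "J (- int k) = H k \<union> (+) x0 ` H k"
proof
  have x0k: "x0 \<in> J (- int k)" using J_mono[OF x0(1)] k by simp
  show "J (- int k) \<subseteq> H k \<union> (+) x0 ` H k"
  proof
    fix y assume y: "y \<in> J (- int k)"
    show "y \<in> H k \<union> (+) x0 ` H k"
    proof (cases "y \<in> G")
      case True thus ?thesis using y by (simp add: H_def)
    next
      case False
      from reduce_all[OF y] obtain g where g: "g \<in> G" "g \<in> J (- int k)" "y - g \<in> J (- 1)" by blast
      have y'G: "y - g \<notin> G"
      proof
        assume "y - g \<in> G"
        hence "(y - g) + g \<in> G" using g(1) G_add by blast
        thus False using False by simp
      qed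
      have "(y - g) + x0 \<in> G" using idx2[OF g(3) y'G x0] .
      hence "((y - g) + x0) + g \<in> G" using g(1) G_add by blast
      hence hG: "y + x0 \<in> G" by (simp add: add_ac)
      have hJ: "y + x0 \<in> J (- int k)" using J_add[OF y x0k] .
      have yeq: "y = x0 + (y + x0)" by (simp add: add_ac)
      have "x0 + (y + x0) \<in> (+) x0 ` H k" by (intro imageI) (simp add: H_def hG hJ)
      with yeq show ?thesis by (metis UnI2)
    qed
  qed
next
  have x0k: "x0 \<in> J (- int k)" using J_mono[OF x0(1)] k by simp
  show "H k \<union> (+) x0 ` H k \<subseteq> J (- int k)" using J_add[OF x0k] by (auto simp: H_def)
qed

lemma H_disj: "H k \<inter> (+) x0 ` H k = {}"
proof (rule ccontr)
  assume "H k \<inter> (+) x0 ` H k \<noteq> {}"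
  then obtain z h where z: "z \<in> H k" "h \<in> H k" "z = x0 + h" by blast
  have "z \<in> G" "h \<in> G" using z(1,2) by (auto simp: H_def)
  hence "z + h \<in> G" by (rule G_add)
  hence "(x0 + h) + h \<in> G" using z(3) by simp
  hence "x0 \<in> G" by (simp add: add.assoc)
  thus False using x0(2) by simp
qed

lemma H0: "H 0 = J 0" using J0_G by (auto simp: H_def)
lemma H_mono: "k \<le> m \<Longrightarrow> H k \<subseteq> H m" unfolding H_def using J_mono by force

end

locale vfm = vf v T \<pi> R d for v :: "'a::field \<Rightarrow> int" and T \<pi> R d +
  fixes mu :: "'a measure"
  assumes haar: "is_haar v mu"
begin

lemma vball_J: "vball v c n = (+) c ` J n"
proof
  show "vball v c n \<subseteq> (+) c ` J n"
  proof
    fix y assume "y \<in> vball v c n"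
    hence "y - c \<in> J n" by (auto simp: vball_def J_iff)
    moreover have "y = c + (y - c)" by (simp add: add_ac)
    ultimately show "y \<in> (+) c ` J n" by blast
  qed
next
  show "(+) c ` J n \<subseteq> vball v c n"
  proof
    fix y assume "y \<in> (+) c ` J n"
    then obtain z where z: "z \<in> J n" "y = c + z" by blast
    have "y - c = z" using z(2) by (simp add: add_ac)
    thus "y \<in> vball v c n" using z(1) by (auto simp: vball_def J_iff)
  qed
qed

lemma vball_sets: "vball v c n \<in> sets mu"
proof -
  have "vball v c n \<in> range (\<lambda>(c, n). vball v c n)" by (rule range_eqI[of _ _ "(c, n)"]) simp
  hence "vball v c n \<in> sigma_sets UNIV (range (\<lambda>(c, n). vball v c n))" by (rule sigma_sets.Basic)
  thus ?thesis using haar by (simp add: is_haar_def)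
qed

lemma J_sets: "J n \<in> sets mu" using vball_sets[of 0 n] vball_J[of 0 n] by simp
lemma Jt_sets: "(+) c ` J n \<in> sets mu" using vball_sets[of c n] vball_J[of c n] by simp

lemma haar_tr: "\<forall>A\<in>sets mu. \<forall>c. (+) c ` A \<in> sets mu \<and> emeasure mu ((+) c ` A) = emeasure mu A"
  using haar unfolding is_haar_def by blast
lemma trans_sets: "A \<in> sets mu \<Longrightarrow> (+) c ` A \<in> sets mu" using haar_tr by blast
lemma trans_em: "A \<in> sets mu \<Longrightarrow> emeasure mu ((+) c ` A) = emeasure mu A" using haar_tr by blast
lemma J0_em: "emeasure mu (J 0) = 1" using haar vball_J[of 0 0] by (simp add: is_haar_def)

lemma decomp: "J (- int (Suc k)) = (\<Union>r\<in>R. (+) (r * inverse (\<pi> ^ Suc k)) ` J (- int k))"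
proof
  show "J (- int (Suc k)) \<subseteq> (\<Union>r\<in>R. (+) (r * inverse (\<pi> ^ Suc k)) ` J (- int k))"
  proof
    fix x assume x: "x \<in> J (- int (Suc k))"
    have xp: "x * \<pi> ^ Suc k \<in> J 0" using J_pi_pow[OF x, of "Suc k"] by simp
    define r where "r = rep (x * \<pi> ^ Suc k)"
    have r: "r \<in> R" "x * \<pi> ^ Suc k - r \<in> J 1" using rep[OF xp] by (auto simp: r_def)
    have "(x * \<pi> ^ Suc k - r) * inverse (\<pi> ^ Suc k) \<in> J (1 - int (Suc k))" by (rule J_ipi_pow[OF r(2)])
    moreover have "(x * \<pi> ^ Suc k - r) * inverse (\<pi> ^ Suc k) = x - r * inverse (\<pi> ^ Suc k)"
      using pi_pow_nz[of "Suc k"] by (simp add: algebra_simps del: power_Suc)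
    ultimately have z: "x - r * inverse (\<pi> ^ Suc k) \<in> J (- int k)" by simp
    have "x = r * inverse (\<pi> ^ Suc k) + (x - r * inverse (\<pi> ^ Suc k))" by (simp add: add_ac)
    thus "x \<in> (\<Union>r\<in>R. (+) (r * inverse (\<pi> ^ Suc k)) ` J (- int k))" using z r(1) by blast
  qed
next
  show "(\<Union>r\<in>R. (+) (r * inverse (\<pi> ^ Suc k)) ` J (- int k)) \<subseteq> J (- int (Suc k))"
  proof
    fix x assume "x \<in> (\<Union>r\<in>R. (+) (r * inverse (\<pi> ^ Suc k)) ` J (- int k))"
    then obtain r z where rz: "r \<in> R" "z \<in> J (- int k)" "x = r * inverse (\<pi> ^ Suc k) + z" by blast
    have "r * inverse (\<pi> ^ Suc k) \<in> J (0 - int (Suc k))" by (rule J_ipi_pow[OF R_J0[OF rz(1)]])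
    moreover have "z \<in> J (0 - int (Suc k))" using J_mono[OF rz(2)] by simp
    ultimately show "x \<in> J (- int (Suc k))" using rz(3) J_add by fastforce
  qed
qed

lemma decomp_disj: "disjoint_family_on (\<lambda>r. (+) (r * inverse (\<pi> ^ Suc k)) ` J (- int k)) R"
unfolding disjoint_family_on_def
proof (intro ballI impI)
  fix r1 r2 assume r: "r1 \<in> R" "r2 \<in> R" "r1 \<noteq> r2"
  show "(+) (r1 * inverse (\<pi> ^ Suc k)) ` J (- int k) \<inter> (+) (r2 * inverse (\<pi> ^ Suc k)) ` J (- int k) = {}"
  proof (rule ccontr)
    assume "\<not> ?thesis"
    then obtain z1 z2 where z: "z1 \<in> J (- int k)" "z2 \<in> J (- int k)"
      "r1 * inverse (\<pi> ^ Suc k) + z1 = r2 * inverse (\<pi> ^ Suc k) + z2" by blast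
    have "(r1 - r2) * inverse (\<pi> ^ Suc k) = z1 + z2" using z(3) by (simp add: algebra_simps) (metis add.assoc addself2 add.commute)
    hence "(r1 - r2) * inverse (\<pi> ^ Suc k) \<in> J (1 - int (Suc k))" using J_add[OF z(1) z(2)] by simp
    hence "r1 - r2 \<in> J 1" using J_ipi_pow_iff by blast
    thus False using R_J1_eq r by blast
  qed
qed

lemma em_J: "emeasure mu (J (- int k)) = ennreal ((2::real) ^ (d * k))"
proof (induction k)
  case 0 thus ?case using J0_em by simp
next
  case (Suc k)
  let ?F = "\<lambda>r. (+) (r * inverse (\<pi> ^ Suc k)) ` J (- int k)"
  have "emeasure mu (J (- int (Suc k))) = emeasure mu (\<Union> (?F ` R))" using decomp by simp
  also have "\<dots> = (\<Sum>r\<in>R. emeasure mu (?F r))"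
    by (rule sum_emeasure[symmetric]) (use Jt_sets decomp_disj R_fin in auto)
  also have "\<dots> = (\<Sum>r\<in>R. emeasure mu (J (- int k)))" using trans_em J_sets by simp
  also have "\<dots> = of_nat (card R) * ennreal ((2::real) ^ (d * k))" using Suc.IH by simp
  also have "\<dots> = ennreal ((2::real) ^ d * 2 ^ (d * k))"
    using R_card by (simp add: ennreal_of_nat_eq_real_of_nat ennreal_mult)
  also have "(2::real) ^ d * 2 ^ (d * k) = 2 ^ (d * Suc k)" by (simp add: power_add)
  finally show ?case .
qed

lemma J_fin: "emeasure mu (J (- int k)) \<noteq> \<infinity>" using em_J by simp
lemma meas_J: "measure mu (J (- int k)) = (2::real) ^ (d * k)" using em_J by (simp add: measure_def)

lemma reps: "\<exists>F. finite F \<and> F \<subseteq> J (- int k) \<and> (\<forall>x\<in>J (- int k). \<exists>a\<in>F. x - a \<in> J 0)"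
proof (induction k)
  case 0
  show ?case by (rule exI[of _ "{0}"]) auto
next
  case (Suc k)
  then obtain F where F: "finite F" "F \<subseteq> J (- int k)" "\<forall>x\<in>J (- int k). \<exists>a\<in>F. x - a \<in> J 0" by blast
  define F' where "F' = (\<lambda>(r, a). r * inverse (\<pi> ^ Suc k) + a) ` (R \<times> F)"
  have "finite F'" unfolding F'_def using F(1) R_fin by simp
  moreover have "F' \<subseteq> J (- int (Suc k))"
  proof
    fix b assume "b \<in> F'"
    then obtain p where p: "p \<in> R \<times> F" "b = (\<lambda>(r, a). r * inverse (\<pi> ^ Suc k) + a) p"
      unfolding F'_def by blast
    then obtain r a where ra: "r \<in> R" "a \<in> F" "b = r * inverse (\<pi> ^ Suc k) + a" by (cases p) auto
    have "b \<in> (\<Union>r\<in>R. (+) (r * inverse (\<pi> ^ Suc k)) ` J (- int k))" using ra F(2) by blast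
    thus "b \<in> J (- int (Suc k))" using decomp by blast
  qed
  moreover have "\<forall>x\<in>J (- int (Suc k)). \<exists>a\<in>F'. x - a \<in> J 0"
  proof
    fix x assume "x \<in> J (- int (Suc k))"
    then obtain r z where rz: "r \<in> R" "z \<in> J (- int k)" "x = r * inverse (\<pi> ^ Suc k) + z"
      using decomp by blast
    from F(3) rz(2) obtain a where a: "a \<in> F" "z - a \<in> J 0" by blast
    have "r * inverse (\<pi> ^ Suc k) + a \<in> F'" unfolding F'_def using rz(1) a(1) by force
    moreover have "x - (r * inverse (\<pi> ^ Suc k) + a) = z - a" using rz(3) by (simp add: add_ac)
    ultimately show "\<exists>a\<in>F'. x - a \<in> J 0" using a(2) by metis
  qed
  ultimately show ?case by blast
qed

lemma H_sets: "H k \<in> sets mu"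
proof -
  obtain F where F: "finite F" "F \<subseteq> J (- int k)" "\<forall>x\<in>J (- int k). \<exists>a\<in>F. x - a \<in> J 0"
    using reps by blast
  have J0k: "J 0 \<subseteq> J (- int k)" using J_mono by force
  have "H k = (\<Union>a\<in>F \<inter> G. (+) a ` J 0)"
  proof
    show "H k \<subseteq> (\<Union>a\<in>F \<inter> G. (+) a ` J 0)"
    proof
      fix x assume x: "x \<in> H k"
      then obtain a where a: "a \<in> F" "x - a \<in> J 0" using F(3) by (auto simp: H_def)
      have xG: "x \<in> G" using x by (simp add: H_def)
      have "x + (x - a) \<in> G" by (rule G_add[OF xG J0_G[OF a(2)]])
      hence aG: "a \<in> G" by simp
      have "x = a + (x - a)" by (simp add: add_ac)
      thus "x \<in> (\<Union>a\<in>F \<inter> G. (+) a ` J 0)" using a aG by blast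
    qed
  next
    show "(\<Union>a\<in>F \<inter> G. (+) a ` J 0) \<subseteq> H k"
    proof
      fix x assume "x \<in> (\<Union>a\<in>F \<inter> G. (+) a ` J 0)"
      then obtain a z where az: "a \<in> F" "a \<in> G" "z \<in> J 0" "x = a + z" by blast
      have "x \<in> G" using G_add[OF az(2) J0_G[OF az(3)]] az(4) by simp
      moreover have "x \<in> J (- int k)" using J_add[of a "- int k" z] az F(2) J0k by blast
      ultimately show "x \<in> H k" by (simp add: H_def)
    qed
  qed
  also have "\<dots> \<in> sets mu" using F(1) Jt_sets by (intro sets.finite_UN) auto
  finally show ?thesis .
qed

lemma H_fin: "emeasure mu (H k) \<noteq> \<infinity>"
proof -
  have "emeasure mu (H k) \<le> emeasure mu (J (- int k))"
    by (rule emeasure_mono) (auto simp: H_def J_sets)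
  thus ?thesis using J_fin[of k] by (auto simp: top_unique)
qed

lemma meas_H: assumes k: "1 \<le> k" shows "measure mu (H k) = (2::real) ^ (d * k) / 2"
proof -
  have "measure mu (J (- int k)) = measure mu (H k \<union> (+) x0 ` H k)" using H_cover[OF k] by simp
  also have "\<dots> = measure mu (H k) + measure mu ((+) x0 ` H k)"
    using H_fin trans_em[OF H_sets] trans_sets[OF H_sets] H_sets H_disj by (intro measure_Union) auto
  also have "measure mu ((+) x0 ` H k) = measure mu (H k)" using trans_em[OF H_sets] by (simp add: measure_def)
  finally show ?thesis using meas_J[of k] by simp
qed

lemma meas_H0: "measure mu (H 0) = 1" using J0_em H0 by (simp add: measure_def)

lemma d_pos: "1 \<le> d"
proof -
  have "{0, e1} \<subseteq> R" using R_0 e1_R by blast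
  hence "card {0, e1} \<le> card R" using R_fin by (rule card_mono[rotated])
  hence "2 \<le> (2::nat) ^ d" using e1_nz R_card by simp
  thus ?thesis by (cases d) auto
qed

end

context vfm begin

lemma setA0: assumes k: "1 \<le> k"
  shows "{y. y \<noteq> 0 \<and> v y = - int k \<and> conic_has_point T y} = H k - H (k - 1)"
proof -
  have ik: "int (k - 1) = int k - 1" using k by simp
  show ?thesis unfolding conic_iff H_def ik by (auto simp: J_iff)
qed

lemma setS: assumes k: "1 \<le> k"
  shows "{y. y \<noteq> 0 \<and> v y = - int k} = J (- int k) - J (- int (k - 1))"
proof -
  have ik: "int (k - 1) = int k - 1" using k by simp
  show ?thesis unfolding ik by (auto simp: J_iff)
qed

lemma setA1: "{y. y \<noteq> 0 \<and> v y = - int k \<and> \<not> conic_has_point T y}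
   = {y. y \<noteq> 0 \<and> v y = - int k} - {y. y \<noteq> 0 \<and> v y = - int k \<and> conic_has_point T y}"
  by auto

lemma mA0: assumes k: "1 \<le> k"
  shows "measure mu {y. y \<noteq> 0 \<and> v y = - int k \<and> conic_has_point T y} = measure mu (H k) - measure mu (H (k - 1))"
  unfolding setA0[OF k] by (rule measure_Diff[OF H_fin H_sets H_sets H_mono]) simp

lemma S_sub: "J (- int (k - 1)) \<subseteq> J (- int k)" using J_mono by force

lemma mS: assumes k: "1 \<le> k"
  shows "measure mu {y. y \<noteq> 0 \<and> v y = - int k} = (2::real) ^ (d * k) - 2 ^ (d * (k - 1))"
  unfolding setS[OF k] using measure_Diff[OF J_fin J_sets J_sets S_sub] meas_J by simp

lemma mA1: assumes k: "1 \<le> k"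
  shows "measure mu {y. y \<noteq> 0 \<and> v y = - int k \<and> \<not> conic_has_point T y}
    = measure mu {y. y \<noteq> 0 \<and> v y = - int k} - measure mu {y. y \<noteq> 0 \<and> v y = - int k \<and> conic_has_point T y}"
proof -
  let ?S = "{y. y \<noteq> 0 \<and> v y = - int k}"
  let ?A = "{y. y \<noteq> 0 \<and> v y = - int k \<and> conic_has_point T y}"
  have Ss: "?S \<in> sets mu" unfolding setS[OF k] using J_sets by blast
  have As: "?A \<in> sets mu" unfolding setA0[OF k] using H_sets by blast
  have Sf: "emeasure mu ?S \<noteq> \<infinity>"
  proof -
    have "emeasure mu ?S \<le> emeasure mu (J (- int k))"
      by (rule emeasure_mono) (auto simp: setS[OF k] J_sets)
    thus ?thesis using J_fin[of k] by (auto simp: top_unique)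
  qed
  show ?thesis unfolding setA1 by (rule measure_Diff[OF Sf Ss As]) auto
qed

lemma main:
  "(\<forall>k::nat. k > 1 \<longrightarrow>
      measure mu {y. y \<noteq> 0 \<and> v y = - int k \<and> conic_has_point T y}
        = measure mu {y. y \<noteq> 0 \<and> v y = - int k \<and> \<not> conic_has_point T y} \<and>
      measure mu {y. y \<noteq> 0 \<and> v y = - int k \<and> \<not> conic_has_point T y}
        = 1/2 * measure mu {y. y \<noteq> 0 \<and> v y = - int k} \<and>
      1/2 * measure mu {y. y \<noteq> 0 \<and> v y = - int k}
        = 1/2 * (2::real) ^ (k * d) * (1 - 1 / 2 ^ d))
   \<and> measure mu {y. y \<noteq> 0 \<and> v y = - 1 \<and> conic_has_point T y} = (2::real) ^ (d - 1) - 1"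
proof (intro conjI allI impI)
  fix k :: nat assume k: "k > 1"
  hence k1: "1 \<le> k" "1 \<le> k - 1" by auto
  define X where "X = (2::real) ^ (d * (k - 1))"
  define q where "q = (2::real) ^ d"
  have qnz: "q \<noteq> 0" by (simp add: q_def)
  have dk: "(2::real) ^ (d * k) = X * q"
  proof -
    have "d * k = d * (k - 1) + d" using k by (cases k) auto
    thus ?thesis by (simp add: X_def q_def power_add)
  qed
  have a0: "measure mu {y. y \<noteq> 0 \<and> v y = - int k \<and> conic_has_point T y} = X * q / 2 - X / 2"
    using mA0[OF k1(1)] meas_H[OF k1(1)] meas_H[OF k1(2)] dk by (simp add: X_def)
  have s: "measure mu {y. y \<noteq> 0 \<and> v y = - int k} = X * q - X" using mS[OF k1(1)] dk by (simp add: X_def)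
  have a1: "measure mu {y. y \<noteq> 0 \<and> v y = - int k \<and> \<not> conic_has_point T y} = X * q / 2 - X / 2"
    using mA1[OF k1(1)] a0 s by simp
  show "measure mu {y. y \<noteq> 0 \<and> v y = - int k \<and> conic_has_point T y}
        = measure mu {y. y \<noteq> 0 \<and> v y = - int k \<and> \<not> conic_has_point T y}" using a0 a1 by simp
  show "measure mu {y. y \<noteq> 0 \<and> v y = - int k \<and> \<not> conic_has_point T y}
        = 1/2 * measure mu {y. y \<noteq> 0 \<and> v y = - int k}" using a1 s by (simp add: field_simps)
  have kd: "(2::real) ^ (k * d) = X * q" using dk by (simp add: mult.commute)
  have e: "1/2 * (X * q - X) = 1/2 * (X * q) * (1 - 1/q)" using qnz by (simp add: field_simps)
  show "1/2 * measure mu {y. y \<noteq> 0 \<and> v y = - int k} = 1/2 * (2::real) ^ (k * d) * (1 - 1 / 2 ^ d)"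
    unfolding s kd using e by (simp add: q_def)
next
  have "measure mu {y. y \<noteq> 0 \<and> v y = - int 1 \<and> conic_has_point T y} = 2 ^ d / 2 - 1"
    using mA0[of 1] meas_H[of 1] meas_H0 by simp
  moreover have "(2::real) ^ d = 2 * 2 ^ (d - 1)" using d_pos by (cases d) auto
  ultimately show "measure mu {y. y \<noteq> 0 \<and> v y = - 1 \<and> conic_has_point T y} = (2::real) ^ (d - 1) - 1"
    by simp
qed

end

lemma bmr_cases: "(x::bool mod_ring) = 0 \<or> x = 1"
proof -
  have c: "card (UNIV :: bool mod_ring set) = 2" using CARD_mod_ring[where 'a=bool] by simp
  have "{0, 1} \<subseteq> (UNIV :: bool mod_ring set)" by simp
  moreover have "card {0, (1::bool mod_ring)} = 2" by simp
  ultimately have "{0, 1} = (UNIV :: bool mod_ring set)" using c by (intro card_subset_eq) auto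
  thus ?thesis by auto
qed

lemma bmr_11: "(1::bool mod_ring) + 1 = 0"
proof -
  have "(1::bool mod_ring) + 1 \<noteq> 1"
  proof
    assume h: "(1::bool mod_ring) + 1 = 1"
    have "(1::bool mod_ring) + 1 = 1 + 0" using h by (simp only: add_0_right)
    hence "(1::bool mod_ring) = 0" by (rule add_left_imp_eq)
    thus False by simp
  qed
  thus ?thesis using bmr_cases[of "1 + 1"] by blast
qed

lemma phi_hom: assumes c2: "(1::'a::field) + 1 = 0"
  shows "comm_ring_hom (\<lambda>c::bool mod_ring. if c = 0 then (0::'a) else 1)"
proof (unfold_locales)
  fix x y :: "bool mod_ring"
  show "(if x + y = 0 then (0::'a) else 1) = (if x = 0 then 0 else 1) + (if y = 0 then 0 else 1)"
    using bmr_cases[of x] bmr_cases[of y] bmr_11 c2 by auto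
  show "(if x * y = 0 then (0::'a) else 1) = (if x = 0 then 0 else 1) * (if y = 0 then 0 else 1)"
    using bmr_cases[of x] bmr_cases[of y] by auto
qed auto

lemma ev_props: assumes c2: "(1::'a::field) + 1 = 0" shows
  "f2_eval (p + q) (T::'a) = f2_eval p T + f2_eval q T"
  "f2_eval (p * q) T = f2_eval p T * f2_eval q T"
  "f2_eval 0 T = 0"
  "f2_eval (p - q) T = f2_eval p T - f2_eval q T"
  "f2_eval [:0, 1:] T = T"
  "f2_eval 1 T = 1"
proof -
  interpret b: comm_ring_hom "\<lambda>c::bool mod_ring. if c = 0 then (0::'a) else 1" by (rule phi_hom[OF c2])
  interpret m: map_poly_comm_ring_hom "\<lambda>c::bool mod_ring. if c = 0 then (0::'a) else 1" ..
  show "f2_eval (p + q) T = f2_eval p T + f2_eval q T" unfolding f2_eval_def by (simp add: m.hom_add)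
  show "f2_eval (p * q) T = f2_eval p T * f2_eval q T" unfolding f2_eval_def by (simp add: m.hom_mult)
  show "f2_eval 0 T = 0" unfolding f2_eval_def by simp
  show "f2_eval (p - q) T = f2_eval p T - f2_eval q T" unfolding f2_eval_def by (simp add: m.hom_minus)
  show "f2_eval [:0, 1:] T = T" unfolding f2_eval_def by (simp add: b.map_poly_pCons_hom)
  show "f2_eval 1 T = 1" unfolding f2_eval_def by simp
qed

lemma ev_pow: assumes c2: "(1::'a::field) + 1 = 0" shows "f2_eval (p ^ n) (T::'a) = f2_eval p T ^ n"
proof (induction n)
  case 0
  have "f2_eval 1 T = 1" unfolding f2_eval_def by simp
  thus ?case by simp
next
  case (Suc n) thus ?case using ev_props(2)[OF c2, of p "p ^ n" T] by simp
qed

definition Sd :: "nat \<Rightarrow> bool mod_ring poly set" where "Sd n = {p. \<forall>i\<ge>n. Polynomial.coeff p i = 0}"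

lemma card_Sd: "card (Sd n) = 2 ^ n"
proof (induction n)
  case 0
  have "Sd 0 = {0}" unfolding Sd_def by (auto simp: poly_eq_iff)
  thus ?case by simp
next
  case (Suc n)
  have fin: "finite (Sd n)" using Suc.IH card_ge_0_finite by force
  have eq: "Sd (Suc n) = (\<lambda>(a, p). pCons a p) ` (UNIV \<times> Sd n)"
  proof
    show "Sd (Suc n) \<subseteq> (\<lambda>(a, p). pCons a p) ` (UNIV \<times> Sd n)"
    proof
      fix q assume q: "q \<in> Sd (Suc n)"
      obtain a p where qp: "q = pCons a p" by (rule pCons_cases)
      have "p \<in> Sd n" unfolding Sd_def
      proof (intro CollectI allI impI)
        fix i assume "n \<le> i"
        hence "Polynomial.coeff q (Suc i) = 0" using q unfolding Sd_def by simp
        thus "Polynomial.coeff p i = 0" using qp by simp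
      qed
      thus "q \<in> (\<lambda>(a, p). pCons a p) ` (UNIV \<times> Sd n)" using qp by force
    qed
  next
    show "(\<lambda>(a, p). pCons a p) ` (UNIV \<times> Sd n) \<subseteq> Sd (Suc n)"
    proof
      fix q assume "q \<in> (\<lambda>(a, p). pCons a p) ` (UNIV \<times> Sd n)"
      then obtain a p where ap: "p \<in> Sd n" "q = pCons a p" by auto
      show "q \<in> Sd (Suc n)" unfolding Sd_def
      proof (intro CollectI allI impI)
        fix i assume "Suc n \<le> i"
        then obtain j where "i = Suc j" "n \<le> j" by (cases i) auto
        thus "Polynomial.coeff q i = 0" using ap unfolding Sd_def by simp
      qed
    qed
  qed
  have inj: "inj_on (\<lambda>(a, p). pCons a p) (UNIV \<times> Sd n)" by (rule inj_onI) auto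
  have "card (Sd (Suc n)) = card ((UNIV :: bool mod_ring set) \<times> Sd n)" using card_image[OF inj] eq by simp
  also have "\<dots> = 2 * 2 ^ n" using Suc.IH fin CARD_mod_ring[where 'a=bool] by (simp add: card_cartesian_product)
  finally show ?case by simp
qed

lemma Sd_deg: "1 \<le> n \<Longrightarrow> Sd n = {p. degree p < n}"
proof
  assume n: "1 \<le> n"
  show "Sd n \<subseteq> {p. degree p < n}"
  proof
    fix p assume "p \<in> Sd n"
    hence "\<forall>i > n - 1. Polynomial.coeff p i = 0" unfolding Sd_def using n by auto
    hence "degree p \<le> n - 1" by (rule degree_le)
    thus "p \<in> {p. degree p < n}" using n by simp
  qed
next
  show "{p. degree p < n} \<subseteq> Sd n" unfolding Sd_def
  proof (intro subsetI CollectI allI impI)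
    fix p i assume "p \<in> {p. degree p < n}" "n \<le> i"
    hence "degree p < i" by simp
    thus "Polynomial.coeff p i = 0" by (rule coeff_eq_0)
  qed
qed


lemma poly2: "(g :: bool mod_ring poly) + g = 0"
proof -
  have "g + g = Polynomial.smult (1 + 1) g" by (simp only: smult_add_left smult_1_left)
  also have "\<dots> = 0" using bmr_11 by simp
  finally show ?thesis .
qed

theorem lemma3p5:
  fixes w :: "bool mod_ring poly" and T :: "'a::field" and v :: "'a \<Rightarrow> int" and mu :: "'a measure"
  assumes "irreducible w" and "lead_coeff w = 1" and "w \<noteq> [:0, 1:]"
    and "is_completion_at w T v" and "is_haar v mu"
  shows "(\<forall>k::nat. k > 1 \<longrightarrow>
            measure mu {y. y \<noteq> 0 \<and> v y = - int k \<and> conic_has_point T y}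
              = measure mu {y. y \<noteq> 0 \<and> v y = - int k \<and> \<not> conic_has_point T y} \<and>
            measure mu {y. y \<noteq> 0 \<and> v y = - int k \<and> \<not> conic_has_point T y}
              = 1/2 * measure mu {y. y \<noteq> 0 \<and> v y = - int k} \<and>
            1/2 * measure mu {y. y \<noteq> 0 \<and> v y = - int k}
              = 1/2 * (2::real) ^ (k * degree w) * (1 - 1 / 2 ^ degree w))
       \<and> measure mu {y. y \<noteq> 0 \<and> v y = - 1 \<and> conic_has_point T y} = (2::real) ^ (degree w - 1) - 1"
proof -
  have c2: "(1::'a) + 1 = 0" using assms(4) unfolding is_completion_at_def by blast
  have vm: "\<And>x y. x \<noteq> 0 \<Longrightarrow> y \<noteq> 0 \<Longrightarrow> v (x * y) = v x + v y" using assms(4) unfolding is_completion_at_def by blast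
  have vu: "\<And>x y. x \<noteq> 0 \<Longrightarrow> y \<noteq> 0 \<Longrightarrow> x + y \<noteq> 0 \<Longrightarrow> min (v x) (v y) \<le> v (x + y)"
    using assms(4) unfolding is_completion_at_def by blast
  have evp: "\<forall>p. p \<noteq> 0 \<longrightarrow> f2_eval p T \<noteq> 0 \<and> v (f2_eval p T) = int (multiplicity w p)"
    using assms(4) unfolding is_completion_at_def by blast
  have dense: "\<forall>y (n::int). \<exists>p q. q \<noteq> 0 \<and>
        (y = f2_eval p T / f2_eval q T \<or> v (y - f2_eval p T / f2_eval q T) \<ge> n)"
    using assms(4) unfolding is_completion_at_def by blast
  have compl: "\<And>s::nat \<Rightarrow> 'a. (\<forall>n::int. \<exists>N. \<forall>i\<ge>N. \<forall>j\<ge>N. s i = s j \<or> v (s i - s j) \<ge> n) \<Longrightarrow>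
        (\<exists>l. \<forall>n::int. \<exists>N. \<forall>i\<ge>N. s i = l \<or> v (s i - l) \<ge> n)"
    using assms(4) unfolding is_completion_at_def by blast
  have VB: "vb v" by unfold_locales (use c2 vm vu in auto)
  interpret B: vb v by (rule VB)
  define ev where "ev p = f2_eval p T" for p
  have ev_add: "ev (p + q) = ev p + ev q" for p q unfolding ev_def by (rule ev_props(1)[OF c2])
  have ev_mult: "ev (p * q) = ev p * ev q" for p q unfolding ev_def by (rule ev_props(2)[OF c2])
  have ev_0: "ev 0 = 0" unfolding ev_def by (rule ev_props(3)[OF c2])
  have ev_diff: "ev (p - q) = ev p - ev q" for p q unfolding ev_def by (rule ev_props(4)[OF c2])
  have ev_x: "ev [:0, 1:] = T" unfolding ev_def by (rule ev_props(5)[OF c2])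
  have ev_1: "ev 1 = 1" unfolding ev_def by (rule ev_props(6)[OF c2])
  have evnz: "p \<noteq> 0 \<Longrightarrow> ev p \<noteq> 0" for p using evp by (simp add: ev_def)
  have evv: "p \<noteq> 0 \<Longrightarrow> v (ev p) = int (multiplicity w p)" for p using evp by (simp add: ev_def)
  have wnz: "w \<noteq> 0" and wnu: "\<not> is_unit w" using assms(1) by (auto simp: irreducible_def)
  have prime: "prime_elem w" by (rule irreducible_imp_prime_elem[OF assms(1)])
  define d where "d = degree w"
  have d1: "1 \<le> d" using is_unit_iff_degree[OF wnz] wnu by (simp add: d_def)
  have ev_J0: "ev p \<in> B.J 0" for p
    by (cases "p = 0") (auto simp: B.J_iff ev_0 evv)
  have ev_J1: "w dvd p \<Longrightarrow> ev p \<in> B.J 1" for p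
  proof (cases "p = 0")
    case False
    assume "w dvd p"
    hence "1 \<le> multiplicity w p" using multiplicity_geI[OF False wnu, of 1] by simp
    thus ?thesis using evv[OF False] by (simp add: B.J_iff)
  qed (simp add: ev_0)
  have ev_unit: "\<not> w dvd p \<Longrightarrow> ev p \<noteq> 0 \<and> v (ev p) = 0" for p
  proof -
    assume nd: "\<not> w dvd p"
    hence "p \<noteq> 0" by auto
    thus ?thesis using evnz evv not_dvd_imp_multiplicity_0[OF nd] by simp
  qed
  define Pd where "Pd = {p :: bool mod_ring poly. degree p < d}"
  have PdS: "Pd = Sd d" using Sd_deg[OF d1] by (simp add: Pd_def)
  have Pd_card: "card Pd = 2 ^ d" using card_Sd PdS by simp
  have Pd_fin: "finite Pd" using Pd_card card_ge_0_finite by force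
  have Pd_0: "0 \<in> Pd" using d1 by (simp add: Pd_def)
  have Pd_add: "p \<in> Pd \<Longrightarrow> q \<in> Pd \<Longrightarrow> p + q \<in> Pd" for p q
    using degree_add_le_max[of p q] by (auto simp: Pd_def)
  have Pd_diff: "p \<in> Pd \<Longrightarrow> q \<in> Pd \<Longrightarrow> p - q \<in> Pd" for p q
    using degree_diff_le_max[of p q] by (auto simp: Pd_def)
  have Pd_ndvd: "p \<in> Pd \<Longrightarrow> p \<noteq> 0 \<Longrightarrow> \<not> w dvd p" for p
    using dvd_imp_degree_le[of w p] by (auto simp: Pd_def d_def)
  have inj: "inj_on ev Pd"
  proof (rule inj_onI)
    fix p q assume pq: "p \<in> Pd" "q \<in> Pd" "ev p = ev q"
    show "p = q"
    proof (rule ccontr)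
      assume "p \<noteq> q"
      hence "ev (p - q) \<noteq> 0" using evnz by simp
      thus False using pq(3) ev_diff by simp
    qed
  qed
  have ndx: "\<not> w dvd [:0, 1:]"
  proof
    assume "w dvd [:0, 1:]"
    then obtain g where g: "[:0, 1:] = w * g" by (rule dvdE)
    have gnz: "g \<noteq> 0" using g by auto
    have "degree ([:0, 1:] :: bool mod_ring poly) = degree w + degree g" using g degree_mult_eq[OF wnz gnz] by simp
    hence dg: "degree g = 0" using d1 by (simp add: d_def)
    have "lead_coeff ([:0, 1:] :: bool mod_ring poly) = lead_coeff w * lead_coeff g" using g lead_coeff_mult by metis
    hence lg: "lead_coeff g = 1" using assms(2) by simp
    obtain a where ga: "g = [:a:]" using dg by (rule degree_eq_zeroE)
    have "g = 1" using lg ga by (simp add: one_pCons)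
    thus False using g assms(3) by simp
  qed
  have T_nz: "T \<noteq> 0" using evnz[of "[:0, 1:]"] ev_x by simp
  have vT: "v T = 0" using ev_unit[OF ndx] ev_x by simp
  have pi_nz: "ev w \<noteq> 0" using evnz[OF wnz] .
  have vpi: "v (ev w) = 1" using evv[OF wnz] multiplicity_self[OF wnz wnu] by simp
  have R_fin: "finite (ev ` Pd)" using Pd_fin by simp
  have R_O: "\<And>r. r \<in> ev ` Pd \<Longrightarrow> r = 0 \<or> 0 \<le> v r" using ev_J0 by (auto simp: B.J_iff)
  have R_0: "0 \<in> ev ` Pd" using Pd_0 ev_0 by force
  have R_add: "\<And>a b. a \<in> ev ` Pd \<Longrightarrow> b \<in> ev ` Pd \<Longrightarrow> a + b \<in> ev ` Pd"
  proof -
    fix a b assume "a \<in> ev ` Pd" "b \<in> ev ` Pd"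
    then obtain p q where "p \<in> Pd" "q \<in> Pd" "a = ev p" "b = ev q" by blast
    thus "a + b \<in> ev ` Pd" using Pd_add ev_add by (metis image_eqI)
  qed
  have R_dist: "\<And>a b. a \<in> ev ` Pd \<Longrightarrow> b \<in> ev ` Pd \<Longrightarrow> a \<noteq> b \<Longrightarrow> v (a - b) < 1"
  proof -
    fix a b assume "a \<in> ev ` Pd" "b \<in> ev ` Pd" "a \<noteq> b"
    then obtain p q where pq: "p \<in> Pd" "q \<in> Pd" "a = ev p" "b = ev q" by blast
    have "p - q \<noteq> 0" using pq \<open>a \<noteq> b\<close> by auto
    hence "\<not> w dvd (p - q)" using Pd_ndvd Pd_diff pq by blast
    hence "ev (p - q) \<noteq> 0 \<and> v (ev (p - q)) = 0" by (rule ev_unit)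
    thus "v (a - b) < 1" using pq ev_diff[of p q] by simp
  qed
  have R_card: "card (ev ` Pd) = 2 ^ d" using card_image[OF inj] Pd_card by simp
  have nonsq: "\<And>r. r \<in> ev ` Pd \<Longrightarrow> T - r * r \<noteq> 0 \<and> v (T - r * r) < 2"
  proof -
    fix r assume "r \<in> ev ` Pd"
    then obtain p where p: "r = ev p" by blast
    define P where "P = [:0, 1:] - p * p"
    have evP: "ev P = T - r * r" unfolding P_def using ev_diff ev_mult ev_x p by simp
    have dP: "pderiv P = 1"
    proof -
      have "pderiv (p * p) = p * pderiv p + p * pderiv p" by (rule pderiv_mult)
      also have "\<dots> = 0" by (rule poly2)
      finally have "pderiv (p * p) = 0" .
      thus ?thesis unfolding P_def by (simp add: pderiv_diff pderiv_pCons)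
    qed
    have nd: "\<not> w ^ 2 dvd P"
    proof
      assume "w ^ 2 dvd P"
      then obtain g where g: "P = w ^ 2 * g" by (rule dvdE)
      have "P = w * (w * g)" using g by (simp add: power2_eq_square mult.assoc)
      hence "pderiv P = w * (pderiv (w * g) + g * pderiv w)" by (simp add: pderiv_mult algebra_simps)
      hence "w dvd 1" using dP by (metis dvd_triv_left)
      thus False using wnu by simp
    qed
    have Pnz: "P \<noteq> 0" using nd by auto
    have "multiplicity w P < 2"
    proof (rule ccontr)
      assume "\<not> multiplicity w P < 2"
      hence "w ^ 2 dvd P" by (intro multiplicity_dvd') simp
      thus False using nd by simp
    qed
    thus "T - r * r \<noteq> 0 \<and> v (T - r * r) < 2" using evnz[OF Pnz] evv[OF Pnz] evP by simp
  qed
  have cover: "\<And>x. x = 0 \<or> 0 \<le> v x \<Longrightarrow> \<exists>r\<in>ev ` Pd. x - r = 0 \<or> 1 \<le> v (x - r)"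
  proof -
    fix x assume "x = 0 \<or> 0 \<le> v x"
    hence x0: "x \<in> B.J 0" by (simp add: B.J_iff)
    from dense[rule_format, of x 1] obtain p q where q: "q \<noteq> 0"
      and pq: "x = ev p / ev q \<or> v (x - ev p / ev q) \<ge> 1" unfolding ev_def by blast
    define z where "z = ev p / ev q"
    have xz: "x - z \<in> B.J 1" using pq by (auto simp: B.J_iff z_def)
    have "x - (x - z) \<in> B.J 0" using B.J_diff[OF x0 B.J_mono[OF xz, of 0]] by simp
    hence zJ0: "z \<in> B.J 0" by simp
    have "\<exists>r\<in>ev ` Pd. x - r \<in> B.J 1"
    proof (cases "p = 0")
      case True
      hence "z = 0" by (simp add: z_def ev_0)
      thus ?thesis using xz R_0 by force
    next
      case False
      define m where "m = multiplicity w q"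
      obtain q' where qq: "q = w ^ multiplicity w q * q'" and nq': "\<not> w dvd q'"
        by (rule multiplicity_decompose'[OF q wnu])
      have q'nz: "q' \<noteq> 0" using nq' by auto
      have znz: "z \<noteq> 0" using evnz[OF False] evnz[OF q] by (simp add: z_def)
      have "v z = v (ev p) + v (inverse (ev q))" unfolding z_def divide_inverse
        using evnz[OF False] evnz[OF q] by (simp add: B.vmult)
      also have "\<dots> = int (multiplicity w p) - int m" using B.vinv[OF evnz[OF q]] evv[OF False] evv[OF q]
        by (simp add: m_def)
      finally have "0 \<le> int (multiplicity w p) - int m" using zJ0 znz by (simp add: B.J_iff)
      hence "m \<le> multiplicity w p" by simp
      hence "w ^ m dvd p" by (rule multiplicity_dvd')
      then obtain p' where pp: "p = w ^ m * p'" by (rule dvdE)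
      have wm: "ev (w ^ m) \<noteq> 0" using evnz wnz by simp
      have "ev q = ev (w ^ multiplicity w q * q')" using qq by (rule arg_cong)
      hence evq: "ev q = ev (w ^ m) * ev q'" by (simp add: m_def ev_mult)
      have zz: "z = ev p' / ev q'" unfolding z_def pp evq using wm by (simp add: ev_mult)
      have cop: "coprime w q'" by (rule prime_elem_imp_coprime[OF prime nq'])
      define s where "s = fst (bezout_coefficients w q')"
      define t where "t = snd (bezout_coefficients w q')"
      have bez: "s * w + t * q' = 1" using bezout_coefficients_fst_snd[of w q'] cop
        by (simp add: s_def t_def coprime_iff_gcd_eq_1)
      have bez': "ev s * ev w + ev t * ev q' = 1" using arg_cong[OF bez, of ev] by (simp add: ev_add ev_mult ev_1)
      have Q'u: "ev q' \<noteq> 0" "v (ev q') = 0" using ev_unit[OF nq'] by auto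
      have iQ: "inverse (ev q') \<in> B.J 0" using B.vinv[OF Q'u(1)] Q'u by (simp add: B.J_iff)
      have e1: "z - ev (p' * t) = ev (p' * s * w) * inverse (ev q')"
      proof -
        have b2: "1 - ev t * ev q' = ev s * ev w" using bez' by (simp add: algebra_simps)
        have "z - ev (p' * t) = ev p' * (1 - ev t * ev q') * inverse (ev q')"
          unfolding zz using Q'u(1) by (simp add: ev_mult field_simps)
        also have "\<dots> = ev (p' * s * w) * inverse (ev q')" unfolding b2 by (simp add: ev_mult mult.assoc)
        finally show ?thesis .
      qed
      have e1m: "z - ev (p' * t) \<in> B.J 1"
        unfolding e1 using B.J_mult[OF ev_J1[of "p' * s * w"] iQ] by simp
      define r0 where "r0 = (p' * t) mod w"
      have r0P: "r0 \<in> Pd" using degree_mod_less[OF wnz, of "p' * t"] d1 by (auto simp: r0_def Pd_def d_def)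
      have "p' * t - r0 = w * ((p' * t) div w)" unfolding r0_def
        by (metis add_diff_cancel_right' div_mult_mod_eq mult.commute)
      hence "ev (p' * t - r0) = ev (w * ((p' * t) div w))" by simp
      hence e2m: "ev (p' * t) - ev r0 \<in> B.J 1" using ev_J1[of "w * ((p' * t) div w)"] ev_diff[of "p' * t" r0] by simp
      have eq: "x - ev r0 = (x - z) + (z - ev (p' * t)) + (ev (p' * t) - ev r0)" by (simp add: algebra_simps)
      have "x - ev r0 \<in> B.J 1" unfolding eq by (rule B.J_add[OF B.J_add[OF xz e1m] e2m])
      thus ?thesis using r0P by blast
    qed
    thus "\<exists>r\<in>ev ` Pd. x - r = 0 \<or> 1 \<le> v (x - r)" by (simp add: B.J_iff)
  qed
  have VF: "vf v T (ev w) (ev ` Pd) d"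
    by (rule vf.intro[OF VB vf_axioms.intro[OF compl pi_nz vpi T_nz vT R_fin R_O R_0 R_add cover R_dist R_card nonsq]])
  interpret M: vfm v T "ev w" "ev ` Pd" d mu
    by (intro vfm.intro VF vfm_axioms.intro assms(5))
  show ?thesis using M.main unfolding d_def .
qed


end
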